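(* Let $\mathcal{X}$ be a compact metric space with a finite Borel measure $\mu$, and let $\boldsymbol{k}(\mathbf{x},\mathbf{z})=\sum_{k=1}^\infty \lambda_k\Phi_k(\mathbf{x})\Phi_k(\mathbf{z})$ be a positive definite (Mercer) kernel on $\mathcal{X}$, where $\lambda_k$ and $\Phi_k$ are the eigenvalues and ($L^2_\mu$-orthonormal) eigenfunctions of its integral operator. Let $g:\mathbb{R}\to\mathbb{R}$ be non-negative and $L$-Lipschitz, and let $\boldsymbol{k}_g(\mathbf{x},\mathbf{z}):=\sum_{k=1}^\infty g(\lambda_k)\Phi_k(\mathbf{x})\Phi_k(\mathbf{z})$ be the associated Modified Spectrum Kernel. Assume there is $M$ with $|\Phi_i(\mathbf{x})|\le M$ for all $i$ and all $\mathbf{x}\in\mathcal{X}$. Let $\mathbf{x}_1,\dots,\mathbf{x}_n\in\mathcal{X}$ be i.i.d. samples drawn from $\mu$, and let $K,K_g\in\mathbb{R}^{n\times n}$ be the kernel matrices $K_{ij}=\frac1n\boldsymbol{k}(\mathbf{x}_i,\mathbf{x}_j)$, $(K_g)_{ij}=\frac1n\boldsymbol{k}_g(\mathbf{x}_i,\mathbf{x}_j)$. Define $\tilde K_g=VDV^T$, where $V=(\mathbf{v}_1,\dots,\mathbf{v}_n)$ with $\mathbf{v}_i$ the $i$-th (unit) eigenvector of $K$, and $D$ is diagonal with $D_{ii}=g(\hat\lambda_i)$, $\hat\lambda_i$ being the $i$-th eigenvalue of $K$. Then, as $n\to\infty$, $$\|\tilde K_g-K_g\|_F\to 0\quad\text{almost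 surely.}$$
   Context: For a positive definite kernel $\boldsymbol{k}$ on $\mathcal{X}$, its integral operator $L_{\boldsymbol{k}}f(\mathbf{x})=\int_{\mathcal{X}}\boldsymbol{k}(\mathbf{x},\mathbf{z})f(\mathbf{z})\,d\mu(\mathbf{z})$ is compact, positive and self-adjoint on $L^2_\mu(\mathcal{X})$, with eigen-decomposition $L_{\boldsymbol{k}}\Phi_i=\lambda_i\Phi_i$, and by Mercer's theorem $\boldsymbol{k}(\mathbf{x},\mathbf{z})=\sum_i\lambda_i\Phi_i(\mathbf{x})\Phi_i(\mathbf{z})$. The Modified Spectrum Kernel $\boldsymbol{k}_g$ has the same eigenfunctions as $\boldsymbol{k}$ with eigenvalues $g(\lambda_k)$ (assumed to define a Mercer kernel). The eigenvalues of $K$ are listed together with a corresponding orthonormal eigenbasis $\mathbf{v}_1,\dots,\mathbf{v}_n$. *)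

theory Defs
  imports "HOL-Probability.Probability"
begin

definition pd_kernel :: "('a \<Rightarrow> 'a \<Rightarrow> real) \<Rightarrow> bool" where
  "pd_kernel k \<longleftrightarrow> (\<forall>x y. k x y = k y x) \<and>
     (\<forall>(m::nat) (xs::nat \<Rightarrow> 'a) (c::nat \<Rightarrow> real).
        0 \<le> (\<Sum>i<m. \<Sum>j<m. c i * c j * k (xs i) (xs j)))"

definition mercer_kernel :: "('a::metric_space \<Rightarrow> 'a \<Rightarrow> real) \<Rightarrow> bool" where
  "mercer_kernel k \<longleftrightarrow> pd_kernel k \<and> continuous_on UNIV (\<lambda>(x, z). k x z)"

definition ms_kernel :: "(real \<Rightarrow> real) \<Rightarrow> (nat \<Rightarrow> real) \<Rightarrow> (nat \<Rightarrow> 'a \<Rightarrow> real)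
    \<Rightarrow> 'a \<Rightarrow> 'a \<Rightarrow> real" where
  "ms_kernel g lam Phi x z = (\<Sum>k. g (lam k) * Phi k x * Phi k z)"

text \<open>Normalised kernel matrix (1/n) k(x_i,x_j), indices i,j < n (entries outside are irrelevant).\<close>
definition kernel_matrix :: "('a \<Rightarrow> 'a \<Rightarrow> real) \<Rightarrow> nat \<Rightarrow> (nat \<Rightarrow> 'a) \<Rightarrow> nat \<Rightarrow> nat \<Rightarrow> real" where
  "kernel_matrix k n xs i j = k (xs i) (xs j) / real n"

text \<open>lam, v form an orthonormal eigenbasis of the n x n matrix A: v i is the i-th
  eigenvector (components v i j, j < n) with eigenvalue lam i.\<close>
definition orth_eigenbasis :: "nat \<Rightarrow> (nat \<Rightarrow> nat \<Rightarrow> real) \<Rightarrow> (nat \<Rightarrow> real)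
    \<Rightarrow> (nat \<Rightarrow> nat \<Rightarrow> real) \<Rightarrow> bool" where
  "orth_eigenbasis n A lam v \<longleftrightarrow>
     (\<forall>i<n. \<forall>i'<n. (\<Sum>j<n. v i j * v i' j) = (if i = i' then 1 else 0)) \<and>
     (\<forall>i<n. \<forall>j<n. (\<Sum>l<n. A j l * v i l) = lam i * v i j)"

text \<open>V D V^T with D = diag(g(lam_i)); entry (j,l).\<close>
definition spectral_modify :: "nat \<Rightarrow> (real \<Rightarrow> real) \<Rightarrow> (nat \<Rightarrow> real)
    \<Rightarrow> (nat \<Rightarrow> nat \<Rightarrow> real) \<Rightarrow> nat \<Rightarrow> nat \<Rightarrow> real" where
  "spectral_modify n g lam v j l = (\<Sum>i<n. v i j * g (lam i) * v i l)"

definition frob_dist :: "nat \<Rightarrow> (nat \<Rightarrow> nat \<Rightarrow> real) \<Rightarrow> (nat \<Rightarrow> nat \<Rightarrow> real) \<Rightarrow> real" where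
  "frob_dist n A B = sqrt (\<Sum>i<n. \<Sum>j<n. (A i j - B i j)\<^sup>2)"

end

theory Submission
  imports Defs "Jordan_Normal_Form.Determinant"
begin

lemma swap4:
  "(\<Sum>j\<in>J. \<Sum>l\<in>L. \<Sum>a\<in>A. \<Sum>b\<in>B. f j l a b) = (\<Sum>a\<in>A. \<Sum>b\<in>B. \<Sum>j\<in>J. \<Sum>l\<in>L. f j l a b)"
proof -
  have "(\<Sum>j\<in>J. \<Sum>l\<in>L. \<Sum>a\<in>A. \<Sum>b\<in>B. f j l a b) = (\<Sum>j\<in>J. \<Sum>a\<in>A. \<Sum>b\<in>B. \<Sum>l\<in>L. f j l a b)"
  proof (rule sum.cong[OF refl])
    fix j
    have "(\<Sum>l\<in>L. \<Sum>a\<in>A. \<Sum>b\<in>B. f j l a b) = (\<Sum>a\<in>A. \<Sum>l\<in>L. \<Sum>b\<in>B. f j l a b)"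
      by (rule sum.swap)
    also have "\<dots> = (\<Sum>a\<in>A. \<Sum>b\<in>B. \<Sum>l\<in>L. f j l a b)"
      by (rule sum.cong[OF refl], rule sum.swap)
    finally show "(\<Sum>l\<in>L. \<Sum>a\<in>A. \<Sum>b\<in>B. f j l a b) = (\<Sum>a\<in>A. \<Sum>b\<in>B. \<Sum>l\<in>L. f j l a b)" .
  qed
  also have "\<dots> = (\<Sum>a\<in>A. \<Sum>j\<in>J. \<Sum>b\<in>B. \<Sum>l\<in>L. f j l a b)"
    by (rule sum.swap)
  also have "\<dots> = (\<Sum>a\<in>A. \<Sum>b\<in>B. \<Sum>j\<in>J. \<Sum>l\<in>L. f j l a b)"
    by (rule sum.cong[OF refl], rule sum.swap)
  finally show ?thesis .
qed

lemma prod_sums4: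
  fixes c :: "'a \<Rightarrow> 'b \<Rightarrow> real"
  shows "(\<Sum>a\<in>A. \<Sum>b\<in>B. c a b * (\<Sum>j\<in>J. x a b j) * (\<Sum>l\<in>L. y a b l)) =
   (\<Sum>a\<in>A. \<Sum>b\<in>B. \<Sum>j\<in>J. \<Sum>l\<in>L. c a b * (x a b j * y a b l))"
proof (intro sum.cong refl)
  fix a b
  have "(\<Sum>j\<in>J. \<Sum>l\<in>L. c a b * (x a b j * y a b l)) = c a b * (\<Sum>j\<in>J. \<Sum>l\<in>L. x a b j * y a b l)"
    by (simp add: sum_distrib_left)
  also have "\<dots> = c a b * (\<Sum>j\<in>J. x a b j) * (\<Sum>l\<in>L. y a b l)"
    by (simp add: sum_product mult.assoc)
  finally show "c a b * (\<Sum>j\<in>J. x a b j) * (\<Sum>l\<in>L. y a b l) = (\<Sum>j\<in>J. \<Sum>l\<in>L. c a b * (x a b j * y a b l))" by simp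
qed

lemma sq_sum_expand:
  fixes f :: "'a \<Rightarrow> real"
  shows "(\<Sum>a\<in>A. f a)\<^sup>2 = (\<Sum>a\<in>A. \<Sum>b\<in>A. f a * f b)"
  by (simp only: power2_eq_square sum_product)


lemma sumA2:
  fixes v :: "nat \<Rightarrow> nat \<Rightarrow> real"
  assumes O1: "\<And>a b. a < n \<Longrightarrow> b < n \<Longrightarrow> (\<Sum>j<n. v a j * v b j) = (if a = b then 1 else 0)"
  shows "(\<Sum>j<n. \<Sum>l<n. (\<Sum>a<n. v a j * h a * v a l)\<^sup>2) = (\<Sum>a<n. (h a)\<^sup>2)"
proof -
  have "(\<Sum>j<n. \<Sum>l<n. (\<Sum>a<n. v a j * h a * v a l)\<^sup>2)
     = (\<Sum>j<n. \<Sum>l<n. \<Sum>a<n. \<Sum>b<n. (h a * h b) * ((v a j * v b j) * (v a l * v b l)))"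
    unfolding sq_sum_expand by (intro sum.cong refl) (simp only: mult_ac)
  also have "\<dots> = (\<Sum>a<n. \<Sum>b<n. (h a * h b) * (\<Sum>j<n. v a j * v b j) * (\<Sum>l<n. v a l * v b l))"
    unfolding prod_sums4 by (rule swap4)
  also have "\<dots> = (\<Sum>a<n. \<Sum>b<n. if a = b then h a * h b else 0)"
    by (intro sum.cong refl) (simp add: O1)
  also have "\<dots> = (\<Sum>a<n. (h a)\<^sup>2)"
    by (simp add: power2_eq_square)
  finally show ?thesis .
qed

lemma sumAB:
  fixes v :: "nat \<Rightarrow> nat \<Rightarrow> real"
  shows "(\<Sum>j<n. \<Sum>l<n. (\<Sum>a<n. v a j * h a * v a l) * (\<Sum>k<r. w k * \<psi> k j * \<psi> k l))
     = (\<Sum>a<n. h a * (\<Sum>k<r. w k * (\<Sum>j<n. v a j * \<psi> k j)\<^sup>2))"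
proof -
  define c where "c = (\<lambda>a k. \<Sum>j<n. v a j * \<psi> k j)"
  have "(\<Sum>j<n. \<Sum>l<n. (\<Sum>a<n. v a j * h a * v a l) * (\<Sum>k<r. w k * \<psi> k j * \<psi> k l))
     = (\<Sum>j<n. \<Sum>l<n. \<Sum>a<n. \<Sum>k<r. (h a * w k) * ((v a j * \<psi> k j) * (v a l * \<psi> k l)))"
    unfolding sum_product by (intro sum.cong refl) (simp only: mult_ac)
  also have "\<dots> = (\<Sum>a<n. \<Sum>k<r. (h a * w k) * c a k * c a k)"
    unfolding c_def prod_sums4 by (rule swap4)
  also have "\<dots> = (\<Sum>a<n. h a * (\<Sum>k<r. w k * (c a k)\<^sup>2))"
    by (simp add: sum_distrib_left power2_eq_square mult_ac)
  finally show ?thesis by (simp only: c_def)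
qed

lemma sumB2:
  fixes w :: "nat \<Rightarrow> real"
  shows "(\<Sum>j<n. \<Sum>l<n. (\<Sum>k<r. w k * \<psi> k j * \<psi> k l)\<^sup>2)
     = (\<Sum>k<r. \<Sum>m<r. w k * w m * (\<Sum>j<n. \<psi> k j * \<psi> m j)\<^sup>2)"
proof -
  have "(\<Sum>j<n. \<Sum>l<n. (\<Sum>k<r. w k * \<psi> k j * \<psi> k l)\<^sup>2)
     = (\<Sum>j<n. \<Sum>l<n. \<Sum>k<r. \<Sum>m<r. (w k * w m) * ((\<psi> k j * \<psi> m j) * (\<psi> k l * \<psi> m l)))"
    unfolding sq_sum_expand by (intro sum.cong refl) (simp only: mult_ac)
  also have "\<dots> = (\<Sum>k<r. \<Sum>m<r. (w k * w m) * (\<Sum>j<n. \<psi> k j * \<psi> m j) * (\<Sum>l<n. \<psi> k l * \<psi> m l))"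
    unfolding prod_sums4 by (rule swap4)
  also have "\<dots> = (\<Sum>k<r. \<Sum>m<r. w k * w m * (\<Sum>j<n. \<psi> k j * \<psi> m j)\<^sup>2)"
    by (intro sum.cong refl) (simp add: power2_eq_square)
  finally show ?thesis .
qed


lemma sq_diff_sums:
  fixes A B :: "'a \<Rightarrow> 'b \<Rightarrow> real"
  shows "(\<Sum>j\<in>J. \<Sum>l\<in>L. (A j l - B j l)\<^sup>2) =
     (\<Sum>j\<in>J. \<Sum>l\<in>L. (A j l)\<^sup>2) - 2 * (\<Sum>j\<in>J. \<Sum>l\<in>L. A j l * B j l) + (\<Sum>j\<in>J. \<Sum>l\<in>L. (B j l)\<^sup>2)"
  by (simp add: power2_diff sum.distrib sum_subtractf sum_distrib_left mult.assoc)

definition cc :: "nat \<Rightarrow> (nat \<Rightarrow> nat \<Rightarrow> real) \<Rightarrow> (nat \<Rightarrow> nat \<Rightarrow> real) \<Rightarrow> nat \<Rightarrow> nat \<Rightarrow> real" where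
  "cc n v \<psi> a k = (\<Sum>j<n. v a j * \<psi> k j)"
definition GG :: "nat \<Rightarrow> (nat \<Rightarrow> nat \<Rightarrow> real) \<Rightarrow> nat \<Rightarrow> nat \<Rightarrow> real" where
  "GG n \<psi> k m = (\<Sum>j<n. \<psi> k j * \<psi> m j)"
definition Eh :: "nat \<Rightarrow> nat \<Rightarrow> (nat \<Rightarrow> nat \<Rightarrow> real) \<Rightarrow> (nat \<Rightarrow> real) \<Rightarrow> (nat \<Rightarrow> real) \<Rightarrow> (nat \<Rightarrow> nat \<Rightarrow> real) \<Rightarrow> real" where
  "Eh n r v h w \<psi> = (\<Sum>j<n. \<Sum>l<n. ((\<Sum>a<n. v a j * h a * v a l) - (\<Sum>k<r. w k * \<psi> k j * \<psi> k l))\<^sup>2)"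

lemma E_expand:
  fixes v :: "nat \<Rightarrow> nat \<Rightarrow> real"
  assumes O1: "\<And>a b. a < n \<Longrightarrow> b < n \<Longrightarrow> (\<Sum>j<n. v a j * v b j) = (if a = b then 1 else 0)"
  shows "Eh n r v h w \<psi> = (\<Sum>a<n. (h a)\<^sup>2) - 2 * (\<Sum>a<n. h a * (\<Sum>k<r. w k * (cc n v \<psi> a k)\<^sup>2))
     + (\<Sum>k<r. \<Sum>m<r. w k * w m * (GG n \<psi> k m)\<^sup>2)"
proof -
  have 1: "(\<Sum>j<n. \<Sum>l<n. (\<Sum>a<n. v a j * h a * v a l)\<^sup>2) = (\<Sum>a<n. (h a)\<^sup>2)"
    by (rule sumA2[OF O1])
  show ?thesis
  unfolding Eh_def sq_diff_sums[of "\<lambda>j l. \<Sum>a<n. v a j * h a * v a l" "\<lambda>j l. \<Sum>k<r. w k * \<psi> k j * \<psi> k l"]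
    1 sumAB sumB2 cc_def GG_def ..
qed

lemma swap3:
  "(\<Sum>a\<in>A. \<Sum>i\<in>I. \<Sum>j\<in>J. f a i j) = (\<Sum>i\<in>I. \<Sum>j\<in>J. \<Sum>a\<in>A. f a i j)"
proof -
  have "(\<Sum>a\<in>A. \<Sum>i\<in>I. \<Sum>j\<in>J. f a i j) = (\<Sum>i\<in>I. \<Sum>a\<in>A. \<Sum>j\<in>J. f a i j)"
    by (rule sum.swap)
  also have "\<dots> = (\<Sum>i\<in>I. \<Sum>j\<in>J. \<Sum>a\<in>A. f a i j)"
    by (rule sum.cong[OF refl], rule sum.swap)
  finally show ?thesis .
qed

lemma cc_G:
  fixes v :: "nat \<Rightarrow> nat \<Rightarrow> real"
  assumes O2: "\<And>i j. i < n \<Longrightarrow> j < n \<Longrightarrow> (\<Sum>a<n. v a i * v a j) = (if i = j then 1 else 0)"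
  shows "(\<Sum>a<n. cc n v \<psi> a k * cc n v \<psi> a m) = GG n \<psi> k m"
proof -
  have "(\<Sum>a<n. cc n v \<psi> a k * cc n v \<psi> a m) = (\<Sum>a<n. \<Sum>i<n. \<Sum>j<n. (v a i * v a j) * (\<psi> k i * \<psi> m j))"
    unfolding cc_def sum_product by (intro sum.cong refl) (simp only: mult_ac)
  also have "\<dots> = (\<Sum>i<n. \<Sum>j<n. (\<Sum>a<n. v a i * v a j) * (\<psi> k i * \<psi> m j))"
    unfolding sum_distrib_right by (rule swap3)
  also have "\<dots> = (\<Sum>i<n. \<Sum>j<n. if i = j then \<psi> k i * \<psi> m j else 0)"
    by (intro sum.cong refl) (simp add: O2)
  also have "\<dots> = GG n \<psi> k m" by (simp add: GG_def)
  finally show ?thesis .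
qed


lemma p_bound:
  fixes v :: "nat \<Rightarrow> nat \<Rightarrow> real"
  assumes O2: "\<And>i j. i < n \<Longrightarrow> j < n \<Longrightarrow> (\<Sum>a<n. v a i * v a j) = (if i = j then 1 else 0)"
    and a: "a < n"
  shows "(\<Sum>k<r. (cc n v \<psi> a k)\<^sup>2) \<le> 1 + (\<Sum>k<r. \<Sum>m<r. \<bar>GG n \<psi> k m - (if k = m then 1 else 0)\<bar>)"
proof -
  define y where "y = (\<lambda>k. cc n v \<psi> a k)"
  define p where "p = (\<Sum>k<r. (y k)\<^sup>2)"
  define \<epsilon> where "\<epsilon> = (\<Sum>k<r. \<Sum>m<r. \<bar>GG n \<psi> k m - (if k = m then 1 else 0)\<bar>)"
  define z where "z = (\<lambda>b. \<Sum>k<r. cc n v \<psi> b k * y k)"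
  have p0: "0 \<le> p" unfolding p_def by (simp add: sum_nonneg)
  have e0: "0 \<le> \<epsilon>" unfolding \<epsilon>_def by (simp add: sum_nonneg)
  have za: "z a = p" unfolding z_def p_def y_def by (simp add: power2_eq_square)
  have "(z a)\<^sup>2 \<le> (\<Sum>b<n. (z b)\<^sup>2)"
    by (rule member_le_sum[where f="\<lambda>b. (z b)\<^sup>2"]) (use a in auto)
  also have "(\<Sum>b<n. (z b)\<^sup>2) = (\<Sum>k<r. \<Sum>m<r. y k * y m * GG n \<psi> k m)"
  proof -
    have "(\<Sum>b<n. (z b)\<^sup>2) = (\<Sum>b<n. \<Sum>k<r. \<Sum>m<r. (y k * y m) * (cc n v \<psi> b k * cc n v \<psi> b m))"
      unfolding z_def sq_sum_expand by (intro sum.cong refl) (simp only: mult_ac)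
    also have "\<dots> = (\<Sum>k<r. \<Sum>m<r. \<Sum>b<n. (y k * y m) * (cc n v \<psi> b k * cc n v \<psi> b m))"
      by (rule swap3)
    also have "\<dots> = (\<Sum>k<r. \<Sum>m<r. y k * y m * GG n \<psi> k m)"
      by (intro sum.cong refl) (simp add: sum_distrib_left[symmetric] cc_G[OF O2])
    finally show ?thesis .
  qed
  also have "\<dots> = (\<Sum>k<r. \<Sum>m<r. y k * y m * (if k = m then 1 else 0))
       + (\<Sum>k<r. \<Sum>m<r. y k * y m * (GG n \<psi> k m - (if k = m then 1 else 0)))"
    unfolding sum.distrib[symmetric] by (intro sum.cong refl) (simp add: algebra_simps)
  also have "(\<Sum>k<r. \<Sum>m<r. y k * y m * (if k = m then 1 else 0)) = p"
    unfolding p_def power2_eq_square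
  proof (intro sum.cong refl)
    fix k assume "k \<in> {..<r}"
    have "(\<Sum>m<r. y k * y m * (if k = m then 1 else 0)) = (\<Sum>m<r. if k = m then y k * y m else 0)"
      by (intro sum.cong refl) simp
    also have "\<dots> = y k * y k" using \<open>k \<in> {..<r}\<close> by simp
    finally show "(\<Sum>m<r. y k * y m * (if k = m then 1 else 0)) = y k * y k" .
  qed
  also have "(\<Sum>k<r. \<Sum>m<r. y k * y m * (GG n \<psi> k m - (if k = m then 1 else 0))) \<le> p * \<epsilon>"
  proof -
    have yk: "\<bar>y k * y m\<bar> \<le> p" if "k < r" "m < r" for k m
    proof -
      have "(y k)\<^sup>2 \<le> p" unfolding p_def
        by (rule member_le_sum[where f="\<lambda>k. (y k)\<^sup>2"]) (use that in auto)
      moreover have "(y m)\<^sup>2 \<le> p" unfolding p_def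
        by (rule member_le_sum[where f="\<lambda>k. (y k)\<^sup>2"]) (use that in auto)
      moreover have "\<bar>y k * y m\<bar> \<le> ((y k)\<^sup>2 + (y m)\<^sup>2) / 2"
      proof -
        have "0 \<le> (\<bar>y k\<bar> - \<bar>y m\<bar>)\<^sup>2" by simp
        also have "\<dots> = (y k)\<^sup>2 + (y m)\<^sup>2 - 2 * \<bar>y k * y m\<bar>"
          by (simp add: power2_diff abs_mult)
        finally show ?thesis by simp
      qed
      ultimately show ?thesis by (simp add: field_simps)
    qed
    have "(\<Sum>k<r. \<Sum>m<r. y k * y m * (GG n \<psi> k m - (if k = m then 1 else 0)))
        \<le> (\<Sum>k<r. \<Sum>m<r. p * \<bar>GG n \<psi> k m - (if k = m then 1 else 0)\<bar>)"
    proof (intro sum_mono)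
      fix k m assume "k \<in> {..<r}" "m \<in> {..<r}"
      then have "\<bar>y k * y m\<bar> \<le> p" using yk by auto
      then show "y k * y m * (GG n \<psi> k m - (if k = m then 1 else 0)) \<le> p * \<bar>GG n \<psi> k m - (if k = m then 1 else 0)\<bar>"
      proof -
        have "y k * y m * (GG n \<psi> k m - (if k = m then 1 else 0)) \<le> \<bar>y k * y m\<bar> * \<bar>GG n \<psi> k m - (if k = m then 1 else 0)\<bar>"
          by (metis abs_ge_self abs_mult)
        also have "\<dots> \<le> p * \<bar>GG n \<psi> k m - (if k = m then 1 else 0)\<bar>"
          by (rule mult_right_mono) (use \<open>\<bar>y k * y m\<bar> \<le> p\<close> in auto)
        finally show ?thesis .
      qed
    qed
    also have "\<dots> = p * \<epsilon>" unfolding \<epsilon>_def by (simp add: sum_distrib_left)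
    finally show ?thesis .
  qed
  finally have "p\<^sup>2 \<le> p + p * \<epsilon>" using za by simp
  then have "p \<le> 1 + \<epsilon>" using p0 e0
  proof (cases "p = 0")
    case True then show ?thesis using e0 by simp
  next
    case False
    then have "0 < p" using p0 by simp
    moreover have "p * p \<le> p * (1 + \<epsilon>)" using \<open>p\<^sup>2 \<le> p + p * \<epsilon>\<close> by (simp add: power2_eq_square algebra_simps)
    ultimately show ?thesis by simp
  qed
  then show ?thesis unfolding p_def y_def \<epsilon>_def .
qed


lemma det_bound:
  fixes v \<psi> :: "nat \<Rightarrow> nat \<Rightarrow> real" and lh lam :: "nat \<Rightarrow> real" and g :: "real \<Rightarrow> real"
  assumes O1: "\<And>a b. a < n \<Longrightarrow> b < n \<Longrightarrow> (\<Sum>j<n. v a j * v b j) = (if a = b then 1 else 0)"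
    and O2: "\<And>i j. i < n \<Longrightarrow> j < n \<Longrightarrow> (\<Sum>a<n. v a i * v a j) = (if i = j then 1 else 0)"
    and Lip: "\<And>x y. \<bar>g x - g y\<bar> \<le> L * \<bar>x - y\<bar>" and g0: "g 0 = 0" and L0: "0 \<le> L"
  shows "Eh n r v (\<lambda>a. g (lh a)) (\<lambda>k. g (lam k)) \<psi> \<le> L\<^sup>2 * Eh n r v lh lam \<psi>
     + (\<Sum>k<r. \<Sum>m<r. \<bar>GG n \<psi> k m - (if k = m then 1 else 0)\<bar>) * L\<^sup>2 * (\<Sum>a<n. (lh a)\<^sup>2)
     + ((\<Sum>k<r. (L\<^sup>2 * (lam k)\<^sup>2 - (g (lam k))\<^sup>2) * GG n \<psi> k k)
        + (\<Sum>k<r. \<Sum>m<r. (g (lam k) * g (lam m) - L\<^sup>2 * (lam k * lam m)) * (GG n \<psi> k m)\<^sup>2))"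
proof -
  define c where "c = cc n v \<psi>"
  define G where "G = GG n \<psi>"
  define \<epsilon> where "\<epsilon> = (\<Sum>k<r. \<Sum>m<r. \<bar>GG n \<psi> k m - (if k = m then 1 else 0)\<bar>)"
  define p where "p = (\<lambda>a. \<Sum>k<r. (c a k)\<^sup>2)"
  define D where "D = (\<lambda>a. L\<^sup>2 * (lh a)\<^sup>2 - (g (lh a))\<^sup>2)"
  define F where "F = (\<lambda>k. L\<^sup>2 * (lam k)\<^sup>2 - (g (lam k))\<^sup>2)"
  have e0: "0 \<le> \<epsilon>" unfolding \<epsilon>_def by (simp add: sum_nonneg)
  have pb: "p a \<le> 1 + \<epsilon>" if "a < n" for a
    unfolding p_def c_def \<epsilon>_def by (rule p_bound[OF O2 that])
  have D0: "0 \<le> D a" for a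
  proof -
    have "\<bar>g (lh a)\<bar> \<le> L * \<bar>lh a\<bar>" using Lip[of "lh a" 0] g0 by simp
    then have "(g (lh a))\<^sup>2 \<le> (L * \<bar>lh a\<bar>)\<^sup>2"
      by (metis abs_ge_zero power2_abs power_mono)
    then show ?thesis unfolding D_def by (simp add: power_mult_distrib)
  qed
  have Gkk: "(\<Sum>a<n. (c a k)\<^sup>2) = G k k" for k
    unfolding c_def G_def power2_eq_square by (rule cc_G[OF O2])
  have Eg: "Eh n r v (\<lambda>a. g (lh a)) (\<lambda>k. g (lam k)) \<psi> = (\<Sum>a<n. (g (lh a))\<^sup>2)
      - 2 * (\<Sum>a<n. g (lh a) * (\<Sum>k<r. g (lam k) * (c a k)\<^sup>2)) + (\<Sum>k<r. \<Sum>m<r. g (lam k) * g (lam m) * (G k m)\<^sup>2)"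
    unfolding c_def G_def by (rule E_expand[OF O1])
  have Ei: "Eh n r v lh lam \<psi> = (\<Sum>a<n. (lh a)\<^sup>2)
      - 2 * (\<Sum>a<n. lh a * (\<Sum>k<r. lam k * (c a k)\<^sup>2)) + (\<Sum>k<r. \<Sum>m<r. lam k * lam m * (G k m)\<^sup>2)"
    unfolding c_def G_def by (rule E_expand[OF O1])
  define S where "S = (\<Sum>a<n. \<Sum>k<r. (g (lh a) * g (lam k) - L\<^sup>2 * (lh a * lam k)) * (c a k)\<^sup>2)"
  have diff: "Eh n r v (\<lambda>a. g (lh a)) (\<lambda>k. g (lam k)) \<psi> - L\<^sup>2 * Eh n r v lh lam \<psi>
     = - (\<Sum>a<n. D a) - 2 * S + (\<Sum>k<r. \<Sum>m<r. (g (lam k) * g (lam m) - L\<^sup>2 * (lam k * lam m)) * (G k m)\<^sup>2)"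
    unfolding Eg Ei S_def D_def
    by (simp add: sum_subtractf sum_distrib_left sum_distrib_right algebra_simps)
  have keyS: "- 2 * S \<le> (\<Sum>a<n. D a * p a) + (\<Sum>k<r. F k * G k k)"
  proof -
    have "- 2 * S = (\<Sum>a<n. \<Sum>k<r. (- 2 * (g (lh a) * g (lam k) - L\<^sup>2 * (lh a * lam k))) * (c a k)\<^sup>2)"
      unfolding S_def sum_distrib_left by (intro sum.cong refl) (simp add: algebra_simps)
    also have "\<dots> \<le> (\<Sum>a<n. \<Sum>k<r. (D a + F k) * (c a k)\<^sup>2)"
    proof (intro sum_mono mult_right_mono)
      fix a k
      have "\<bar>g (lh a) - g (lam k)\<bar> \<le> L * \<bar>lh a - lam k\<bar>" by (rule Lip)
      then have "(g (lh a) - g (lam k))\<^sup>2 \<le> (L * \<bar>lh a - lam k\<bar>)\<^sup>2"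
        by (metis abs_ge_zero power2_abs power_mono)
      then have "(g (lh a) - g (lam k))\<^sup>2 \<le> L\<^sup>2 * (lh a - lam k)\<^sup>2"
        by (simp add: power_mult_distrib)
      then show "- 2 * (g (lh a) * g (lam k) - L\<^sup>2 * (lh a * lam k)) \<le> D a + F k"
        unfolding D_def F_def by (simp add: power2_diff algebra_simps)
    qed simp
    also have "\<dots> = (\<Sum>a<n. D a * p a) + (\<Sum>k<r. F k * (\<Sum>a<n. (c a k)\<^sup>2))"
    proof -
      have "(\<Sum>a<n. \<Sum>k<r. (D a + F k) * (c a k)\<^sup>2) = (\<Sum>a<n. \<Sum>k<r. D a * (c a k)\<^sup>2) + (\<Sum>a<n. \<Sum>k<r. F k * (c a k)\<^sup>2)"
        by (simp add: sum.distrib distrib_right)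
      also have "(\<Sum>a<n. \<Sum>k<r. D a * (c a k)\<^sup>2) = (\<Sum>a<n. D a * p a)"
        unfolding p_def by (simp add: sum_distrib_left)
      also have "(\<Sum>a<n. \<Sum>k<r. F k * (c a k)\<^sup>2) = (\<Sum>k<r. F k * (\<Sum>a<n. (c a k)\<^sup>2))"
        unfolding sum_distrib_left by (rule sum.swap)
      finally show ?thesis .
    qed
    also have "\<dots> = (\<Sum>a<n. D a * p a) + (\<Sum>k<r. F k * G k k)"
      by (simp add: Gkk)
    finally show ?thesis .
  qed
  have Dp: "(\<Sum>a<n. D a * p a) - (\<Sum>a<n. D a) \<le> \<epsilon> * L\<^sup>2 * (\<Sum>a<n. (lh a)\<^sup>2)"
  proof -
    have "(\<Sum>a<n. D a * p a) - (\<Sum>a<n. D a) = (\<Sum>a<n. D a * (p a - 1))"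
      by (simp add: sum_subtractf algebra_simps)
    also have "\<dots> \<le> (\<Sum>a<n. L\<^sup>2 * (lh a)\<^sup>2 * \<epsilon>)"
    proof (rule sum_mono)
      fix a assume "a \<in> {..<n}"
      then have "p a \<le> 1 + \<epsilon>" using pb by auto
      then have "p a - 1 \<le> \<epsilon>" by simp
      then have "D a * (p a - 1) \<le> D a * \<epsilon>" using D0 by (simp add: mult_left_mono)
      also have "\<dots> \<le> L\<^sup>2 * (lh a)\<^sup>2 * \<epsilon>" using e0 unfolding D_def
        by (simp add: mult_right_mono)
      finally show "D a * (p a - 1) \<le> L\<^sup>2 * (lh a)\<^sup>2 * \<epsilon>" .
    qed
    also have "\<dots> = \<epsilon> * L\<^sup>2 * (\<Sum>a<n. (lh a)\<^sup>2)"
      by (simp add: sum_distrib_left sum_distrib_right mult_ac)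
    finally show ?thesis .
  qed
  have "Eh n r v (\<lambda>a. g (lh a)) (\<lambda>k. g (lam k)) \<psi> - L\<^sup>2 * Eh n r v lh lam \<psi>
     \<le> \<epsilon> * L\<^sup>2 * (\<Sum>a<n. (lh a)\<^sup>2) + ((\<Sum>k<r. F k * G k k)
        + (\<Sum>k<r. \<Sum>m<r. (g (lam k) * g (lam m) - L\<^sup>2 * (lam k * lam m)) * (G k m)\<^sup>2))"
    using diff keyS Dp by linarith
  then show ?thesis unfolding \<epsilon>_def F_def G_def by linarith
qed


lemma orth_rows_cols:
  fixes v :: "nat \<Rightarrow> nat \<Rightarrow> real"
  assumes O1: "\<And>a b. a < n \<Longrightarrow> b < n \<Longrightarrow> (\<Sum>j<n. v a j * v b j) = (if a = b then 1 else 0)"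
    and i: "i < n" and j: "j < n"
  shows "(\<Sum>a<n. v a i * v a j) = (if i = j then 1 else 0)"
proof -
  define A where "A = mat n n (\<lambda>(a,j). v a j)"
  have A: "A \<in> carrier_mat n n" unfolding A_def by simp
  have AT: "transpose_mat A \<in> carrier_mat n n" using A by simp
  have "A * transpose_mat A = 1\<^sub>m n"
  proof (rule eq_matI)
    fix a b assume ab: "a < dim_row (1\<^sub>m n)" "b < dim_col (1\<^sub>m n)"
    have "(A * transpose_mat A) $$ (a,b) = (\<Sum>j<n. v a j * v b j)"
      using ab unfolding A_def by (simp add: scalar_prod_def lessThan_atLeast0 row_def col_def)
    then show "(A * transpose_mat A) $$ (a,b) = 1\<^sub>m n $$ (a,b)" using ab O1 by simp
  qed (simp_all add: A_def)
  then have "transpose_mat A * A = 1\<^sub>m n" using mat_mult_left_right_inverse[OF A AT] by blast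
  then have "(transpose_mat A * A) $$ (i,j) = 1\<^sub>m n $$ (i,j)" by simp
  moreover have "(transpose_mat A * A) $$ (i,j) = (\<Sum>a<n. v a i * v a j)"
    using i j unfolding A_def by (simp add: scalar_prod_def lessThan_atLeast0 row_def col_def)
  ultimately show ?thesis using i j by simp
qed


lemma minkowski2:
  fixes A B :: "'a \<Rightarrow> 'b \<Rightarrow> real"
  shows "sqrt (\<Sum>j\<in>J. \<Sum>l\<in>L. (A j l + B j l)\<^sup>2) \<le> sqrt (\<Sum>j\<in>J. \<Sum>l\<in>L. (A j l)\<^sup>2) + sqrt (\<Sum>j\<in>J. \<Sum>l\<in>L. (B j l)\<^sup>2)"
proof -
  have eq: "(\<Sum>j\<in>J. \<Sum>l\<in>L. (h j l)\<^sup>2) = (\<Sum>p\<in>J \<times> L. (h (fst p) (snd p))\<^sup>2)" for h :: "'a \<Rightarrow> 'b \<Rightarrow> real"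
    by (simp add: sum.cartesian_product case_prod_beta)
  show ?thesis
    unfolding eq using L2_set_triangle_ineq[of "\<lambda>p. A (fst p) (snd p)" "\<lambda>p. B (fst p) (snd p)" "J \<times> L"]
    unfolding L2_set_def .
qed

lemma tail_matrix_bound:
  fixes t :: "'a \<Rightarrow> 'a \<Rightarrow> real" and x :: "nat \<Rightarrow> 'a"
  assumes t0: "\<And>y. 0 \<le> t y y" and tCS: "\<And>y z. (t y z)\<^sup>2 \<le> t y y * t z z"
  shows "(\<Sum>j<n. \<Sum>l<n. (t (x j) (x l) / real n)\<^sup>2) \<le> ((\<Sum>j<n. t (x j) (x j)) / real n)\<^sup>2"
proof -
  have "(\<Sum>j<n. \<Sum>l<n. (t (x j) (x l) / real n)\<^sup>2) = (\<Sum>j<n. \<Sum>l<n. (t (x j) (x l))\<^sup>2) / (real n)\<^sup>2"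
    by (simp add: power_divide sum_divide_distrib)
  also have "\<dots> \<le> (\<Sum>j<n. \<Sum>l<n. t (x j) (x j) * t (x l) (x l)) / (real n)\<^sup>2"
    by (intro divide_right_mono sum_mono tCS) simp
  also have "(\<Sum>j<n. \<Sum>l<n. t (x j) (x j) * t (x l) (x l)) = (\<Sum>j<n. t (x j) (x j))\<^sup>2"
    by (simp add: power2_eq_square sum_product)
  finally show ?thesis by (simp add: power_divide)
qed

lemma spectral_decomp:
  fixes K v :: "nat \<Rightarrow> nat \<Rightarrow> real" and lh :: "nat \<Rightarrow> real"
  assumes O2: "\<And>i j. i < n \<Longrightarrow> j < n \<Longrightarrow> (\<Sum>a<n. v a i * v a j) = (if i = j then 1 else 0)"
    and eig: "\<And>a j. a < n \<Longrightarrow> j < n \<Longrightarrow> (\<Sum>l<n. K j l * v a l) = lh a * v a j"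
    and j: "j < n" and l: "l < n"
  shows "K j l = (\<Sum>a<n. v a j * lh a * v a l)"
proof -
  have "(\<Sum>m<n. K j m * (if m = l then 1 else 0)) = (\<Sum>m<n. if m = l then K j m else 0)"
    by (intro sum.cong refl) simp
  then have "K j l = (\<Sum>m<n. K j m * (if m = l then 1 else 0))" using l by simp
  also have "\<dots> = (\<Sum>m<n. K j m * (\<Sum>a<n. v a m * v a l))"
    by (intro sum.cong refl) (simp add: O2 l)
  also have "\<dots> = (\<Sum>a<n. (\<Sum>m<n. K j m * v a m) * v a l)"
  proof -
    have "(\<Sum>m<n. K j m * (\<Sum>a<n. v a m * v a l)) = (\<Sum>m<n. \<Sum>a<n. K j m * v a m * v a l)"
      by (simp add: sum_distrib_left mult.assoc)
    also have "\<dots> = (\<Sum>a<n. \<Sum>m<n. K j m * v a m * v a l)" by (rule sum.swap)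
    also have "\<dots> = (\<Sum>a<n. (\<Sum>m<n. K j m * v a m) * v a l)" by (simp add: sum_distrib_right)
    finally show ?thesis .
  qed
  also have "\<dots> = (\<Sum>a<n. v a j * lh a * v a l)"
    by (intro sum.cong refl) (simp add: eig j)
  finally show ?thesis .
qed


lemma frob_bound_n:
  fixes x :: "nat \<Rightarrow> 'a" and lh :: "nat \<Rightarrow> real" and v :: "nat \<Rightarrow> nat \<Rightarrow> real"
    and k kg tk tg :: "'a \<Rightarrow> 'a \<Rightarrow> real" and lam :: "nat \<Rightarrow> real" and Phi :: "nat \<Rightarrow> 'a \<Rightarrow> real"
    and g :: "real \<Rightarrow> real"
  assumes n: "0 < n"
    and eig: "orth_eigenbasis n (kernel_matrix k n x) lh v"
    and ksplit: "\<And>y z. k y z = (\<Sum>i<r. lam i * Phi i y * Phi i z) + tk y z"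
    and kgsplit: "\<And>y z. kg y z = (\<Sum>i<r. g (lam i) * Phi i y * Phi i z) + tg y z"
    and tk0: "\<And>y. 0 \<le> tk y y" and tkCS: "\<And>y z. (tk y z)\<^sup>2 \<le> tk y y * tk z z"
    and tg0: "\<And>y. 0 \<le> tg y y" and tgCS: "\<And>y z. (tg y z)\<^sup>2 \<le> tg y y * tg z z"
    and kC: "\<And>y z. \<bar>k y z\<bar> \<le> Ck"
    and Lip: "\<And>a b. \<bar>g a - g b\<bar> \<le> L * \<bar>a - b\<bar>" and g0: "g 0 = 0" and L0: "0 \<le> L"
    and psi: "\<psi> = (\<lambda>k j. Phi k (x j) / sqrt (real n))"
  shows "frob_dist n (spectral_modify n g lh v) (kernel_matrix kg n x) \<le>
    sqrt (L\<^sup>2 * ((\<Sum>j<n. tk (x j) (x j)) / real n)\<^sup>2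
      + (\<Sum>k<r. \<Sum>m<r. \<bar>GG n \<psi> k m - (if k = m then 1 else 0)\<bar>) * L\<^sup>2 * Ck\<^sup>2
      + ((\<Sum>k<r. (L\<^sup>2 * (lam k)\<^sup>2 - (g (lam k))\<^sup>2) * GG n \<psi> k k)
        + (\<Sum>k<r. \<Sum>m<r. (g (lam k) * g (lam m) - L\<^sup>2 * (lam k * lam m)) * (GG n \<psi> k m)\<^sup>2)))
    + (\<Sum>j<n. tg (x j) (x j)) / real n"
proof -
  define K where "K = kernel_matrix k n x"
  define \<epsilon> where "\<epsilon> = (\<Sum>k<r. \<Sum>m<r. \<bar>GG n \<psi> k m - (if k = m then 1 else 0)\<bar>)"
  define Q where "Q = ((\<Sum>k<r. (L\<^sup>2 * (lam k)\<^sup>2 - (g (lam k))\<^sup>2) * GG n \<psi> k k)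
        + (\<Sum>k<r. \<Sum>m<r. (g (lam k) * g (lam m) - L\<^sup>2 * (lam k * lam m)) * (GG n \<psi> k m)\<^sup>2))"
  define a where "a = (\<Sum>j<n. tk (x j) (x j)) / real n"
  define b where "b = (\<Sum>j<n. tg (x j) (x j)) / real n"
  have O1: "\<And>a b. a < n \<Longrightarrow> b < n \<Longrightarrow> (\<Sum>j<n. v a j * v b j) = (if a = b then 1 else 0)"
    using eig unfolding orth_eigenbasis_def by blast
  have EV: "\<And>a j. a < n \<Longrightarrow> j < n \<Longrightarrow> (\<Sum>l<n. K j l * v a l) = lh a * v a j"
    using eig unfolding orth_eigenbasis_def K_def by blast
  have O2: "\<And>i j. i < n \<Longrightarrow> j < n \<Longrightarrow> (\<Sum>a<n. v a i * v a j) = (if i = j then 1 else 0)"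
    by (rule orth_rows_cols[OF O1])
  have dec: "K j l = (\<Sum>a<n. v a j * lh a * v a l)" if "j < n" "l < n" for j l
    by (rule spectral_decomp[OF O2 EV that])
  have sq: "sqrt (real n) * sqrt (real n) = real n" by simp
  have pp: "\<psi> i j * \<psi> i l = Phi i (x j) * Phi i (x l) / real n" for i j l
    unfolding psi using n by (simp add: field_simps)
  have Bsum: "(\<Sum>i<r. c i * \<psi> i j * \<psi> i l) = (\<Sum>i<r. c i * Phi i (x j) * Phi i (x l)) / real n" for c :: "nat \<Rightarrow> real" and j l
    by (simp add: sum_divide_distrib mult.assoc pp)
  have Eid: "Eh n r v lh lam \<psi> \<le> a\<^sup>2"
  proof -
    have "Eh n r v lh lam \<psi> = (\<Sum>j<n. \<Sum>l<n. (tk (x j) (x l) / real n)\<^sup>2)"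
      unfolding Eh_def
    proof (intro sum.cong refl)
      fix j l assume "j \<in> {..<n}" "l \<in> {..<n}"
      then have "(\<Sum>a<n. v a j * lh a * v a l) = K j l" using dec by simp
      also have "K j l = ((\<Sum>i<r. lam i * Phi i (x j) * Phi i (x l)) + tk (x j) (x l)) / real n"
        unfolding K_def kernel_matrix_def using ksplit by simp
      finally show "((\<Sum>a<n. v a j * lh a * v a l) - (\<Sum>k<r. lam k * \<psi> k j * \<psi> k l))\<^sup>2 = (tk (x j) (x l) / real n)\<^sup>2"
        by (simp add: Bsum add_divide_distrib)
    qed
    also have "\<dots> \<le> a\<^sup>2" unfolding a_def by (rule tail_matrix_bound[OF tk0 tkCS])
    finally show ?thesis .
  qed
  have lh2: "(\<Sum>a<n. (lh a)\<^sup>2) \<le> Ck\<^sup>2"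
  proof -
    have "(\<Sum>a<n. (lh a)\<^sup>2) = (\<Sum>j<n. \<Sum>l<n. (\<Sum>a<n. v a j * lh a * v a l)\<^sup>2)"
      by (rule sumA2[OF O1, symmetric])
    also have "\<dots> = (\<Sum>j<n. \<Sum>l<n. (K j l)\<^sup>2)"
      by (intro sum.cong refl) (simp add: dec)
    also have "\<dots> \<le> (\<Sum>j<n. \<Sum>l<n. (Ck / real n)\<^sup>2)"
    proof (intro sum_mono)
      fix j l
      have "\<bar>K j l\<bar> \<le> Ck / real n"
        unfolding K_def kernel_matrix_def using kC n by (simp add: abs_divide divide_right_mono)
      then show "(K j l)\<^sup>2 \<le> (Ck / real n)\<^sup>2"
        by (metis abs_ge_zero order_trans power2_abs power_mono)
    qed
    also have "\<dots> = Ck\<^sup>2" using n by (simp add: power2_eq_square)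
    finally show ?thesis .
  qed
  have e0: "0 \<le> \<epsilon>" unfolding \<epsilon>_def by (simp add: sum_nonneg)
  have Eg: "Eh n r v (\<lambda>a. g (lh a)) (\<lambda>k. g (lam k)) \<psi> \<le> L\<^sup>2 * a\<^sup>2 + \<epsilon> * L\<^sup>2 * Ck\<^sup>2 + Q"
  proof -
    have "Eh n r v (\<lambda>a. g (lh a)) (\<lambda>k. g (lam k)) \<psi> \<le> L\<^sup>2 * Eh n r v lh lam \<psi> + \<epsilon> * L\<^sup>2 * (\<Sum>a<n. (lh a)\<^sup>2) + Q"
      unfolding \<epsilon>_def Q_def by (rule det_bound[OF O1 O2 Lip g0 L0])
    also have "\<dots> \<le> L\<^sup>2 * a\<^sup>2 + \<epsilon> * L\<^sup>2 * Ck\<^sup>2 + Q"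
      by (intro add_mono mult_left_mono Eid lh2 order_refl mult_nonneg_nonneg e0) simp_all
    finally show ?thesis .
  qed
  have "frob_dist n (spectral_modify n g lh v) (kernel_matrix kg n x)
      = sqrt (\<Sum>j<n. \<Sum>l<n. (((\<Sum>a<n. v a j * g (lh a) * v a l) - (\<Sum>k<r. g (lam k) * \<psi> k j * \<psi> k l))
             + (- (tg (x j) (x l) / real n)))\<^sup>2)"
    unfolding frob_dist_def spectral_modify_def kernel_matrix_def
    by (intro arg_cong[where f=sqrt] sum.cong refl) (simp add: kgsplit Bsum add_divide_distrib diff_diff_eq)
  also have "\<dots> \<le> sqrt (Eh n r v (\<lambda>a. g (lh a)) (\<lambda>k. g (lam k)) \<psi>) + sqrt (\<Sum>j<n. \<Sum>l<n. (- (tg (x j) (x l) / real n))\<^sup>2)"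
    unfolding Eh_def by (rule minkowski2)
  also have "sqrt (\<Sum>j<n. \<Sum>l<n. (- (tg (x j) (x l) / real n))\<^sup>2) \<le> b"
  proof -
    have "(\<Sum>j<n. \<Sum>l<n. (- (tg (x j) (x l) / real n))\<^sup>2) \<le> b\<^sup>2"
      unfolding b_def using tail_matrix_bound[where t=tg and x=x and n=n, OF tg0 tgCS] by simp
    moreover have "0 \<le> b" unfolding b_def using n by (simp add: sum_nonneg tg0)
    ultimately show ?thesis using real_sqrt_le_mono[of "\<Sum>j<n. \<Sum>l<n. (- (tg (x j) (x l) / real n))\<^sup>2" "b\<^sup>2"] by simp
  qed
  also have "sqrt (Eh n r v (\<lambda>a. g (lh a)) (\<lambda>k. g (lam k)) \<psi>) \<le> sqrt (L\<^sup>2 * a\<^sup>2 + \<epsilon> * L\<^sup>2 * Ck\<^sup>2 + Q)"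
    using Eg by simp
  finally show ?thesis unfolding a_def b_def \<epsilon>_def Q_def by simp
qed


lemma GG_avg:
  "GG n (\<lambda>k j. Phi k (x j) / sqrt (real n)) k m = (\<Sum>j<n. Phi k (x j) * Phi m (x j)) / real n"
proof (cases "n = 0")
  case True then show ?thesis by (simp add: GG_def)
next
  case False
  then show ?thesis unfolding GG_def by (simp add: sum_divide_distrib field_simps)
qed

lemma det_conv:
  fixes x :: "nat \<Rightarrow> 'a" and lh :: "nat \<Rightarrow> nat \<Rightarrow> real" and v :: "nat \<Rightarrow> nat \<Rightarrow> nat \<Rightarrow> real"
    and k kg :: "'a \<Rightarrow> 'a \<Rightarrow> real" and tk tg :: "nat \<Rightarrow> 'a \<Rightarrow> 'a \<Rightarrow> real"
    and lam :: "nat \<Rightarrow> real" and Phi :: "nat \<Rightarrow> 'a \<Rightarrow> real" and g :: "real \<Rightarrow> real"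
    and \<tau> \<tau>g :: "nat \<Rightarrow> real"
  assumes eig: "\<And>n. orth_eigenbasis n (kernel_matrix k n x) (lh n) (v n)"
    and ksplit: "\<And>r y z. k y z = (\<Sum>i<r. lam i * Phi i y * Phi i z) + tk r y z"
    and kgsplit: "\<And>r y z. kg y z = (\<Sum>i<r. g (lam i) * Phi i y * Phi i z) + tg r y z"
    and tk0: "\<And>r y. 0 \<le> tk r y y" and tkCS: "\<And>r y z. (tk r y z)\<^sup>2 \<le> tk r y y * tk r z z"
    and tg0: "\<And>r y. 0 \<le> tg r y y" and tgCS: "\<And>r y z. (tg r y z)\<^sup>2 \<le> tg r y y * tg r z z"
    and kC: "\<And>y z. \<bar>k y z\<bar> \<le> Ck"
    and Lip: "\<And>a b. \<bar>g a - g b\<bar> \<le> L * \<bar>a - b\<bar>" and g0: "g 0 = 0" and L0: "0 \<le> L"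
    and Gl: "\<And>k m. (\<lambda>n. (\<Sum>j<n. Phi k (x j) * Phi m (x j)) / real n) \<longlonglongrightarrow> (if k = m then 1 else 0)"
    and tl: "\<And>r. (\<lambda>n. (\<Sum>j<n. tk r (x j) (x j)) / real n) \<longlonglongrightarrow> \<tau> r"
    and tgl: "\<And>r. (\<lambda>n. (\<Sum>j<n. tg r (x j) (x j)) / real n) \<longlonglongrightarrow> \<tau>g r"
    and \<tau>0: "\<tau> \<longlonglongrightarrow> 0" and \<tau>g0: "\<tau>g \<longlonglongrightarrow> 0"
  shows "(\<lambda>n. frob_dist n (spectral_modify n g (lh n) (v n)) (kernel_matrix kg n x)) \<longlonglongrightarrow> 0"
proof -
  define F where "F = (\<lambda>n. frob_dist n (spectral_modify n g (lh n) (v n)) (kernel_matrix kg n x))"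
  define A where "A = (\<lambda>n k m. (\<Sum>j<n. Phi k (x j) * Phi m (x j)) / real n)"
  define d where "d = (\<lambda>k m::nat. if k = m then 1 else (0::real))"
  define U where "U = (\<lambda>r n. sqrt (L\<^sup>2 * ((\<Sum>j<n. tk r (x j) (x j)) / real n)\<^sup>2
      + (\<Sum>k<r. \<Sum>m<r. \<bar>A n k m - d k m\<bar>) * L\<^sup>2 * Ck\<^sup>2
      + ((\<Sum>k<r. (L\<^sup>2 * (lam k)\<^sup>2 - (g (lam k))\<^sup>2) * A n k k)
        + (\<Sum>k<r. \<Sum>m<r. (g (lam k) * g (lam m) - L\<^sup>2 * (lam k * lam m)) * (A n k m)\<^sup>2)))
    + (\<Sum>j<n. tg r (x j) (x j)) / real n)"
  have F0: "0 \<le> F n" for n unfolding F_def frob_dist_def by (simp add: sum_nonneg)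
  have FU: "F n \<le> U r n" if "0 < n" for r n
  proof -
    have "F n \<le> sqrt (L\<^sup>2 * ((\<Sum>j<n. tk r (x j) (x j)) / real n)\<^sup>2
      + (\<Sum>k<r. \<Sum>m<r. \<bar>GG n (\<lambda>k j. Phi k (x j) / sqrt (real n)) k m - (if k = m then 1 else 0)\<bar>) * L\<^sup>2 * Ck\<^sup>2
      + ((\<Sum>k<r. (L\<^sup>2 * (lam k)\<^sup>2 - (g (lam k))\<^sup>2) * GG n (\<lambda>k j. Phi k (x j) / sqrt (real n)) k k)
        + (\<Sum>k<r. \<Sum>m<r. (g (lam k) * g (lam m) - L\<^sup>2 * (lam k * lam m)) * (GG n (\<lambda>k j. Phi k (x j) / sqrt (real n)) k m)\<^sup>2)))
    + (\<Sum>j<n. tg r (x j) (x j)) / real n"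
      unfolding F_def
      by (rule frob_bound_n[OF that eig ksplit kgsplit tk0 tkCS tg0 tgCS kC Lip g0 L0 refl])
    then show ?thesis unfolding U_def A_def d_def GG_avg .
  qed
  have Alim: "(\<lambda>n. A n k m) \<longlonglongrightarrow> d k m" for k m unfolding A_def d_def by (rule Gl)
  have Ulim: "U r \<longlonglongrightarrow> sqrt (L\<^sup>2 * (\<tau> r)\<^sup>2
      + (\<Sum>k<r. \<Sum>m<r. \<bar>d k m - d k m\<bar>) * L\<^sup>2 * Ck\<^sup>2
      + ((\<Sum>k<r. (L\<^sup>2 * (lam k)\<^sup>2 - (g (lam k))\<^sup>2) * d k k)
        + (\<Sum>k<r. \<Sum>m<r. (g (lam k) * g (lam m) - L\<^sup>2 * (lam k * lam m)) * (d k m)\<^sup>2)))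
    + \<tau>g r" for r
    unfolding U_def by (intro tendsto_intros Alim tl tgl)
  have Qz: "(\<Sum>k<r. (L\<^sup>2 * (lam k)\<^sup>2 - (g (lam k))\<^sup>2) * d k k)
        + (\<Sum>k<r. \<Sum>m<r. (g (lam k) * g (lam m) - L\<^sup>2 * (lam k * lam m)) * (d k m)\<^sup>2) = 0" for r
  proof -
    have "(\<Sum>k<r. \<Sum>m<r. (g (lam k) * g (lam m) - L\<^sup>2 * (lam k * lam m)) * (d k m)\<^sup>2)
        = (\<Sum>k<r. (g (lam k) * g (lam k) - L\<^sup>2 * (lam k * lam k)))"
    proof (intro sum.cong refl)
      fix k assume "k \<in> {..<r}"
      have "(\<Sum>m<r. (g (lam k) * g (lam m) - L\<^sup>2 * (lam k * lam m)) * (d k m)\<^sup>2)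
          = (\<Sum>m<r. if k = m then g (lam k) * g (lam m) - L\<^sup>2 * (lam k * lam m) else 0)"
        unfolding d_def by (intro sum.cong refl) simp
      also have "\<dots> = g (lam k) * g (lam k) - L\<^sup>2 * (lam k * lam k)" using \<open>k \<in> {..<r}\<close> by simp
      finally show "(\<Sum>m<r. (g (lam k) * g (lam m) - L\<^sup>2 * (lam k * lam m)) * (d k m)\<^sup>2)
          = g (lam k) * g (lam k) - L\<^sup>2 * (lam k * lam k)" .
    qed
    moreover have "(\<Sum>k<r. (L\<^sup>2 * (lam k)\<^sup>2 - (g (lam k))\<^sup>2) * d k k) = (\<Sum>k<r. L\<^sup>2 * (lam k)\<^sup>2 - (g (lam k))\<^sup>2)"
      unfolding d_def by simp
    ultimately show ?thesis by (simp add: sum.distrib[symmetric] power2_eq_square)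
  qed
  have Ulim': "U r \<longlonglongrightarrow> \<bar>L * \<tau> r\<bar> + \<tau>g r" for r
  proof -
    have "sqrt (L\<^sup>2 * (\<tau> r)\<^sup>2) = \<bar>L * \<tau> r\<bar>"
      by (simp add: power_mult_distrib[symmetric])
    then show ?thesis using Ulim[of r] Qz[of r] by simp
  qed
  have Vlim: "(\<lambda>r. \<bar>L * \<tau> r\<bar> + \<tau>g r) \<longlonglongrightarrow> 0"
    using tendsto_add[OF tendsto_rabs_zero[OF tendsto_mult_right_zero[OF \<tau>0, of L]] \<tau>g0]
    by (simp add: mult.commute)
  show ?thesis
    unfolding F_def[symmetric]
  proof (rule LIMSEQ_I)
    fix e :: real assume e: "0 < e"
    obtain r where r: "\<bar>L * \<tau> r\<bar> + \<tau>g r < e"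
      using order_tendstoD(2)[OF Vlim e] by (auto simp: eventually_sequentially)
    obtain N where N: "\<And>n. n \<ge> N \<Longrightarrow> U r n < e"
      using order_tendstoD(2)[OF Ulim'[of r] r] by (auto simp: eventually_sequentially)
    show "\<exists>no. \<forall>n\<ge>no. norm (F n - 0) < e"
    proof (intro exI[of _ "max N 1"] allI impI)
      fix n assume "max N 1 \<le> n"
      then have "0 < n" "n \<ge> N" by auto
      then have "F n < e" using FU[of n r] N[of n] by simp
      then show "norm (F n - 0) < e" using F0[of n] by simp
    qed
  qed
qed


lemma series_CS:
  fixes d p q :: "nat \<Rightarrow> real"
  assumes d: "\<And>i. 0 \<le> d i"
    and spp: "summable (\<lambda>i. d i * p i * p i)" and sqq: "summable (\<lambda>i. d i * q i * q i)"
    and spq: "summable (\<lambda>i. d i * p i * q i)"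
  shows "(\<Sum>i. d i * p i * q i)\<^sup>2 \<le> (\<Sum>i. d i * p i * p i) * (\<Sum>i. d i * q i * q i)"
proof (rule LIMSEQ_le)
  show "(\<lambda>N. (\<Sum>i<N. d i * p i * q i)\<^sup>2) \<longlonglongrightarrow> (\<Sum>i. d i * p i * q i)\<^sup>2"
    by (intro tendsto_intros summable_LIMSEQ spq)
  show "(\<lambda>N. (\<Sum>i<N. d i * p i * p i) * (\<Sum>i<N. d i * q i * q i)) \<longlonglongrightarrow> (\<Sum>i. d i * p i * p i) * (\<Sum>i. d i * q i * q i)"
    by (intro tendsto_intros summable_LIMSEQ spp sqq)
  show "\<exists>N. \<forall>n\<ge>N. (\<Sum>i<n. d i * p i * q i)\<^sup>2 \<le> (\<Sum>i<n. d i * p i * p i) * (\<Sum>i<n. d i * q i * q i)"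
  proof (intro exI allI impI)
    fix n :: nat
    have "(\<Sum>i<n. (sqrt (d i) * p i) * (sqrt (d i) * q i))\<^sup>2 \<le> (\<Sum>i<n. (sqrt (d i) * p i)\<^sup>2) * (\<Sum>i<n. (sqrt (d i) * q i)\<^sup>2)"
      by (rule Cauchy_Schwarz_ineq_sum)
    moreover have "(sqrt (d i) * p i) * (sqrt (d i) * q i) = d i * p i * q i" for i
    proof -
      have s: "sqrt (d i) * sqrt (d i) = d i" using d[of i] by simp
      have "(sqrt (d i) * p i) * (sqrt (d i) * q i) = (sqrt (d i) * sqrt (d i)) * p i * q i" by (simp only: mult_ac)
      then show ?thesis by (simp only: s)
    qed
    moreover have "(sqrt (d i) * p i)\<^sup>2 = d i * p i * p i" for i
      using d[of i] by (simp add: power2_eq_square mult_ac)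
    moreover have "(sqrt (d i) * q i)\<^sup>2 = d i * q i * q i" for i
      using d[of i] by (simp add: power2_eq_square mult_ac)
    ultimately show "(\<Sum>i<n. d i * p i * q i)\<^sup>2 \<le> (\<Sum>i<n. d i * p i * p i) * (\<Sum>i<n. d i * q i * q i)"
      by simp
  qed
qed

definition tailk :: "(nat \<Rightarrow> real) \<Rightarrow> (nat \<Rightarrow> 'a \<Rightarrow> real) \<Rightarrow> nat \<Rightarrow> 'a \<Rightarrow> 'a \<Rightarrow> real" where
  "tailk c Phi r x z = (\<Sum>i. c (i + r) * Phi (i + r) x * Phi (i + r) z)"

locale ser_kernel =
  fixes c :: "nat \<Rightarrow> real" and Phi :: "nat \<Rightarrow> 'a \<Rightarrow> real"
  assumes c0: "\<And>i. 0 \<le> c i"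
    and summ: "\<And>x z. summable (\<lambda>i. c i * Phi i x * Phi i z)"
begin

lemma summ_shift: "summable (\<lambda>i. c (i + r) * Phi (i + r) x * Phi (i + r) z)"
  using summable_ignore_initial_segment[OF summ[of x z], of r] by simp

lemma split: "(\<Sum>i. c i * Phi i x * Phi i z) = (\<Sum>i<r. c i * Phi i x * Phi i z) + tailk c Phi r x z"
  unfolding tailk_def using suminf_split_initial_segment[OF summ[of x z], of r] by simp

lemma tail_nonneg: "0 \<le> tailk c Phi r x x"
  unfolding tailk_def
  by (rule suminf_nonneg[OF summ_shift]) (simp add: c0 mult.assoc)

lemma tail_le: "tailk c Phi r x x \<le> (\<Sum>i. c i * Phi i x * Phi i x)"
proof -
  have "0 \<le> (\<Sum>i<r. c i * Phi i x * Phi i x)" by (intro sum_nonneg) (simp add: c0 mult.assoc)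
  then show ?thesis using split[of x x r] by simp
qed

lemma tail_CS: "(tailk c Phi r x z)\<^sup>2 \<le> tailk c Phi r x x * tailk c Phi r z z"
  unfolding tailk_def
  by (rule series_CS[where d="\<lambda>i. c (i + r)" and p="\<lambda>i. Phi (i + r) x" and q="\<lambda>i. Phi (i + r) z"])
     (simp_all add: c0 summ_shift)

lemma tail_lim: "(\<lambda>r. tailk c Phi r x z) \<longlonglongrightarrow> 0"
  unfolding tailk_def by (rule suminf_exist_split2[OF summ])

lemma term_le: "c i * Phi i x * Phi i x \<le> (\<Sum>i. c i * Phi i x * Phi i x)"
  using sum_le_suminf[OF summ[of x x], of "{i}"] c0 by (simp add: mult.assoc)

end


lemma hoeffding_avg:
  fixes P :: "'w measure" and \<mu> :: "'a measure" and Xs :: "nat \<Rightarrow> 'w \<Rightarrow> 'a"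
  assumes P: "prob_space P"
    and Xs_meas: "\<And>i. Xs i \<in> measurable P \<mu>"
    and indep: "prob_space.indep_vars P (\<lambda>_. \<mu>) Xs UNIV"
    and distr: "\<And>i. distr P \<mu> (Xs i) = \<mu>"
    and f: "f \<in> borel_measurable \<mu>" and fB: "\<And>x. \<bar>f x\<bar> \<le> B" and B: "0 < B"
    and n: "0 < n" and e: "0 \<le> e"
  shows "measure P {\<omega>\<in>space P. \<bar>(\<Sum>i<n. f (Xs i \<omega>)) - real n * (\<integral>x. f x \<partial>\<mu>)\<bar> \<ge> e}
     \<le> 2 * exp (-2 * e\<^sup>2 / (real n * (2 * B)\<^sup>2))"
proof -
  interpret prob_space P by (rule P)
  have ind: "indep_vars (\<lambda>_. borel) (\<lambda>i \<omega>. f (Xs i \<omega>)) {..<n}"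
    by (rule indep_vars_compose2[OF indep_vars_subset[OF indep]]) (use f in auto)
  have E: "expectation (\<lambda>\<omega>. f (Xs i \<omega>)) = (\<integral>x. f x \<partial>\<mu>)" for i
  proof -
    have "expectation (\<lambda>\<omega>. f (Xs i \<omega>)) = (\<integral>x. f x \<partial>distr P \<mu> (Xs i))"
      by (rule integral_distr[symmetric]) (use Xs_meas f in auto)
    then show ?thesis using distr by simp
  qed
  interpret H: Hoeffding_ineq P "{..<n}" "\<lambda>i \<omega>. f (Xs i \<omega>)" "\<lambda>_. -B" "\<lambda>_. B" "real n * (\<integral>x. f x \<partial>\<mu>)"
  proof unfold_locales
    show "finite {..<n}" by simp
    show "indep_vars (\<lambda>_. borel) (\<lambda>i \<omega>. f (Xs i \<omega>)) {..<n}" by (rule ind)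
    show "AE x in P. f (Xs i x) \<in> {- B..B}" for i
    proof (rule AE_I2)
      fix x show "f (Xs i x) \<in> {- B..B}" using fB[of "Xs i x"] by (simp add: abs_le_iff)
    qed
    show "real n * (\<integral>x. f x \<partial>\<mu>) \<equiv> \<Sum>i<n. expectation (\<lambda>\<omega>. f (Xs i \<omega>))"
      by (simp add: E)
  qed
  have pos: "(\<Sum>i<n. (B - - B)\<^sup>2) > 0" using n B by simp
  have "measure P {\<omega>\<in>space P. \<bar>(\<Sum>i<n. f (Xs i \<omega>)) - real n * (\<integral>x. f x \<partial>\<mu>)\<bar> \<ge> e}
     \<le> 2 * exp (- 2 * e\<^sup>2 / (\<Sum>i<n. (B - - B)\<^sup>2))"
    by (rule H.Hoeffding_ineq_abs_ge[OF e pos])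
  also have "(\<Sum>i<n. (B - - B)\<^sup>2) = real n * (2 * B)\<^sup>2" by simp
  finally show ?thesis .
qed

lemma slln_bounded:
  fixes P :: "'w measure" and \<mu> :: "'a measure" and Xs :: "nat \<Rightarrow> 'w \<Rightarrow> 'a"
  assumes P: "prob_space P"
    and Xs_meas: "\<And>i. Xs i \<in> measurable P \<mu>"
    and indep: "prob_space.indep_vars P (\<lambda>_. \<mu>) Xs UNIV"
    and distr: "\<And>i. distr P \<mu> (Xs i) = \<mu>"
    and f: "f \<in> borel_measurable \<mu>" and fBnd: "\<And>x. \<bar>f x\<bar> \<le> Bnd"
  shows "AE \<omega> in P. (\<lambda>n. (\<Sum>i<n. f (Xs i \<omega>)) / real n) \<longlonglongrightarrow> (\<integral>x. f x \<partial>\<mu>)"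
proof -
  interpret prob_space P by (rule P)
  define B where "B = \<bar>Bnd\<bar> + 1"
  have B: "0 < B" unfolding B_def by simp
  have fB: "\<bar>f x\<bar> \<le> B" for x using fBnd[of x] unfolding B_def by simp
  define E where "E = (\<integral>x. f x \<partial>\<mu>)"
  define S where "S = (\<lambda>n \<omega>. \<Sum>i<n. f (Xs i \<omega>))"
  define e where "e = (\<lambda>m::nat. 1 / (real m + 1))"
  define A where "A = (\<lambda>m n. {\<omega>\<in>space P. \<bar>S n \<omega> - real n * E\<bar> \<ge> real n * e m})"
  have e0: "0 < e m" for m unfolding e_def by simp
  have Ameas: "A m n \<in> sets P" for m n
  proof -
    have [measurable]: "(\<lambda>\<omega>. f (Xs i \<omega>)) \<in> borel_measurable P" for i
      using measurable_comp[OF Xs_meas f] by (simp add: comp_def)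
    show ?thesis unfolding A_def S_def by measurable
  qed
  have AE_m: "AE \<omega> in P. eventually (\<lambda>n. \<omega> \<in> space P - A m n) sequentially" for m
  proof (rule borel_cantelli_AE1)
    show "A m n \<in> sets P" for n by (rule Ameas)
    show "emeasure P (A m n) < \<infinity>" for n by (simp add: emeasure_eq_measure)
    define c where "c = (e m)\<^sup>2 / (2 * B\<^sup>2)"
    have c: "0 < c" unfolding c_def using e0[of m] B by simp
    have bnd: "measure P (A m n) \<le> 2 * exp (- c) ^ n" for n
    proof (cases "n = 0")
      case True
      have "measure P (A m n) \<le> 1" by (rule prob_le_1)
      moreover have "2 * exp (- c) ^ n = 2" using True by simp
      ultimately show ?thesis by linarith
    next
      case False
      then have n: "0 < n" by simp
      have "measure P (A m n) \<le> 2 * exp (-2 * (real n * e m)\<^sup>2 / (real n * (2 * B)\<^sup>2))"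
        unfolding A_def S_def E_def
        by (rule hoeffding_avg[OF P Xs_meas indep distr f fB B n]) (use e0[of m] in simp)
      also have "-2 * (real n * e m)\<^sup>2 / (real n * (2 * B)\<^sup>2) = real n * (- c)"
        using n B unfolding c_def by (simp add: field_simps power2_eq_square)
      also have "exp (real n * (- c)) = exp (- c) ^ n" by (rule exp_of_nat_mult)
      finally show ?thesis .
    qed
    have "summable (\<lambda>n. 2 * exp (- c) ^ n)"
      by (rule summable_mult) (use c in \<open>simp add: summable_geometric_iff\<close>)
    then show "summable (\<lambda>n. measure P (A m n))"
      by (rule summable_comparison_test'[where N=0]) (use bnd in simp)
  qed
  have "AE \<omega> in P. \<forall>m. eventually (\<lambda>n. \<omega> \<in> space P - A m n) sequentially"
    using AE_m by (simp add: AE_all_countable)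
  then show ?thesis
  proof (rule eventually_mono)
    fix \<omega> assume H: "\<forall>m. eventually (\<lambda>n. \<omega> \<in> space P - A m n) sequentially"
    show "(\<lambda>n. (\<Sum>i<n. f (Xs i \<omega>)) / real n) \<longlonglongrightarrow> (\<integral>x. f x \<partial>\<mu>)"
    proof (rule LIMSEQ_I)
      fix r :: real assume r: "0 < r"
      obtain m where m: "inverse (real (Suc m)) < r" using reals_Archimedean[OF r] by blast
      obtain N where N: "\<And>n. n \<ge> N \<Longrightarrow> \<omega> \<in> space P - A m n"
        using H[rule_format, of m] unfolding eventually_sequentially by blast
      show "\<exists>no. \<forall>n\<ge>no. norm ((\<Sum>i<n. f (Xs i \<omega>)) / real n - (\<integral>x. f x \<partial>\<mu>)) < r"
      proof (intro exI[of _ "max N 1"] allI impI)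
        fix n assume nN: "max N 1 \<le> n"
        then have n: "0 < n" by simp
        have "\<omega> \<in> space P - A m n" using N[of n] nN by simp
        then have "\<bar>S n \<omega> - real n * E\<bar> < real n * e m" unfolding A_def by auto
        then have "\<bar>S n \<omega> / real n - E\<bar> < e m"
        proof -
          have "S n \<omega> / real n - E = (S n \<omega> - real n * E) / real n" using n by (simp add: field_simps)
          then have "\<bar>S n \<omega> / real n - E\<bar> = \<bar>S n \<omega> - real n * E\<bar> / real n" using n by (simp add: abs_divide)
          also have "\<dots> < e m" using \<open>\<bar>S n \<omega> - real n * E\<bar> < real n * e m\<close> n by (simp add: divide_less_eq mult.commute)
          finally show ?thesis .
        qed
        also have "e m < r" using m unfolding e_def by (simp add: inverse_eq_divide add.commute)
        finally show "norm ((\<Sum>i<n. f (Xs i \<omega>)) / real n - (\<integral>x. f x \<partial>\<mu>)) < r"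
          unfolding S_def E_def by simp
      qed
    qed
  qed
qed


lemma indep_pair:
  fixes P :: "'w measure" and \<mu> :: "'a measure" and Xs :: "nat \<Rightarrow> 'w \<Rightarrow> 'a"
  assumes P: "prob_space P"
    and indep: "prob_space.indep_vars P (\<lambda>_. \<mu>) Xs UNIV"
    and jl: "j \<noteq> l"
  shows "prob_space.indep_var P \<mu> (Xs j) \<mu> (Xs l)"
proof -
  interpret prob_space P by (rule P)
  have rv: "random_variable \<mu> (Xs i)" for i using indep unfolding indep_vars_def by auto
  have IS: "indep_sets (\<lambda>i. sigma_sets (space P) {Xs i -` A \<inter> space P |A. A \<in> sets \<mu>}) UNIV"
    using indep unfolding indep_vars_def by auto
  have sub: "sigma_sets (space P) {Xs i -` A \<inter> space P |A. A \<in> sets \<mu>} \<subseteq> events" for i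
    using IS unfolding indep_sets_def by auto
  show ?thesis unfolding indep_var_eq
  proof (intro conjI rv)
    show "indep_set (sigma_sets (space P) {Xs j -` A \<inter> space P |A. A \<in> sets \<mu>})
                    (sigma_sets (space P) {Xs l -` A \<inter> space P |A. A \<in> sets \<mu>})"
      unfolding indep_sets2_eq
    proof (intro conjI ballI sub)
      fix a b assume a: "a \<in> sigma_sets (space P) {Xs j -` A \<inter> space P |A. A \<in> sets \<mu>}"
        and b: "b \<in> sigma_sets (space P) {Xs l -` A \<inter> space P |A. A \<in> sets \<mu>}"
      define Af where "Af = (\<lambda>i. if i = j then a else b)"
      have "prob (\<Inter>i\<in>{j,l}. Af i) = (\<Prod>i\<in>{j,l}. prob (Af i))"
        by (rule indep_setsD[OF IS]) (use a b jl in \<open>auto simp: Af_def\<close>)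
      then show "prob (a \<inter> b) = prob a * prob b" using jl by (simp add: Af_def Int_commute)
    qed
  qed
qed

lemma pair_integral:
  fixes P :: "'w measure" and \<mu> :: "'a measure" and Xs :: "nat \<Rightarrow> 'w \<Rightarrow> 'a" and F :: "'a \<times> 'a \<Rightarrow> real"
  assumes P: "prob_space P"
    and indep: "prob_space.indep_vars P (\<lambda>_. \<mu>) Xs UNIV"
    and distr: "\<And>i. distr P \<mu> (Xs i) = \<mu>"
    and jl: "j \<noteq> l"
    and F: "F \<in> borel_measurable (\<mu> \<Otimes>\<^sub>M \<mu>)"
  shows "(\<integral>\<omega>. F (Xs j \<omega>, Xs l \<omega>) \<partial>P) = (\<integral>p. F p \<partial>(\<mu> \<Otimes>\<^sub>M \<mu>))"
proof -
  interpret prob_space P by (rule P)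
  have iv: "indep_var \<mu> (Xs j) \<mu> (Xs l)" by (rule indep_pair[OF P indep jl])
  then have rv: "random_variable \<mu> (Xs j)" "random_variable \<mu> (Xs l)"
    and eq: "distr P \<mu> (Xs j) \<Otimes>\<^sub>M distr P \<mu> (Xs l) = distr P (\<mu> \<Otimes>\<^sub>M \<mu>) (\<lambda>\<omega>. (Xs j \<omega>, Xs l \<omega>))"
    unfolding indep_var_distribution_eq by auto
  have m: "(\<lambda>\<omega>. (Xs j \<omega>, Xs l \<omega>)) \<in> measurable P (\<mu> \<Otimes>\<^sub>M \<mu>)"
    using rv by (rule measurable_Pair)
  have "(\<integral>\<omega>. F (Xs j \<omega>, Xs l \<omega>) \<partial>P) = (\<integral>p. F p \<partial>distr P (\<mu> \<Otimes>\<^sub>M \<mu>) (\<lambda>\<omega>. (Xs j \<omega>, Xs l \<omega>)))"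
    using integral_distr[OF m F] by simp
  also have "distr P (\<mu> \<Otimes>\<^sub>M \<mu>) (\<lambda>\<omega>. (Xs j \<omega>, Xs l \<omega>)) = \<mu> \<Otimes>\<^sub>M \<mu>"
    using eq distr by simp
  finally show ?thesis .
qed


lemma k_pair_meas:
  fixes \<mu> :: "'a measure" and k :: "'a \<Rightarrow> 'a \<Rightarrow> real"
  assumes Phi_meas: "\<And>i. Phi i \<in> borel_measurable \<mu>"
    and expansion: "\<And>x z. (\<lambda>i. lam i * Phi i x * Phi i z) sums k x z"
  shows "(\<lambda>p. k (fst p) (snd p)) \<in> borel_measurable (\<mu> \<Otimes>\<^sub>M \<mu>)"
proof (rule borel_measurable_LIMSEQ_real)
  note [measurable] = Phi_meas
  show "(\<lambda>N. \<Sum>i<N. lam i * Phi i (fst p) * Phi i (snd p)) \<longlonglongrightarrow> k (fst p) (snd p)" for p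
    using expansion[of "fst p" "snd p"] unfolding sums_def .
  show "(\<lambda>p. \<Sum>i<N. lam i * Phi i (fst p) * Phi i (snd p)) \<in> borel_measurable (\<mu> \<Otimes>\<^sub>M \<mu>)" for N
    by measurable
qed

lemma lam_nonneg:
  fixes \<mu> :: "'a measure" and k :: "'a \<Rightarrow> 'a \<Rightarrow> real" and P :: "'w measure"
    and Xs :: "nat \<Rightarrow> 'w \<Rightarrow> 'a"
  assumes prob_mu: "prob_space \<mu>"
    and pd: "pd_kernel k"
    and Phi_meas: "\<And>i. Phi i \<in> borel_measurable \<mu>"
    and Phi_orthonormal: "\<And>i j. (LINT x|\<mu>. Phi i x * Phi j x) = (if i = j then 1 else 0)"
    and Phi_eigen: "\<And>i. AE x in \<mu>. (LINT z|\<mu>. k x z * Phi i z) = lam i * Phi i x"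
    and expansion: "\<And>x z. (\<lambda>i. lam i * Phi i x * Phi i z) sums k x z"
    and Phi_bounded: "\<And>i x. \<bar>Phi i x\<bar> \<le> M"
    and kC: "\<And>x z. \<bar>k x z\<bar> \<le> C"
    and P_prob: "prob_space P"
    and Xs_meas: "\<And>i. Xs i \<in> measurable P \<mu>"
    and Xs_indep: "prob_space.indep_vars P (\<lambda>_. \<mu>) Xs UNIV"
    and Xs_distr: "\<And>i. distr P \<mu> (Xs i) = \<mu>"
  shows "0 \<le> lam i"
proof -
  interpret mu: prob_space \<mu> by (rule prob_mu)
  interpret PP: prob_space P by (rule P_prob)
  interpret pp: pair_prob_space \<mu> \<mu> by unfold_locales
  note [measurable] = Phi_meas k_pair_meas[OF Phi_meas expansion]
  define f where "f = Phi i"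
  define F where "F = (\<lambda>p. f (fst p) * f (snd p) * k (fst p) (snd p))"
  define B where "B = M * M * C"
  have fM: "\<bar>f x\<bar> \<le> M" for x unfolding f_def by (rule Phi_bounded)
  have M0: "0 \<le> M" using fM[of undefined] by simp
  have FB: "\<bar>F p\<bar> \<le> B" for p
  proof -
    have "\<bar>F p\<bar> = \<bar>f (fst p)\<bar> * \<bar>f (snd p)\<bar> * \<bar>k (fst p) (snd p)\<bar>" unfolding F_def by (simp add: abs_mult)
    also have "\<dots> \<le> M * M * C"
      by (intro mult_mono fM kC) (auto simp: M0)
    finally show ?thesis unfolding B_def .
  qed
  have Fm[measurable]: "F \<in> borel_measurable (\<mu> \<Otimes>\<^sub>M \<mu>)" unfolding F_def f_def by measurable
  have Fint: "integrable (\<mu> \<Otimes>\<^sub>M \<mu>) F"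
    by (rule pp.integrable_const_bound[where B=B]) (use FB in auto)
  define I where "I = (\<integral>p. F p \<partial>(\<mu> \<Otimes>\<^sub>M \<mu>))"
  have I_lam: "I = lam i"
  proof -
    have "I = (\<integral>x. (\<integral>z. F (x, z) \<partial>\<mu>) \<partial>\<mu>)"
      unfolding I_def by (rule pp.integral_fst'[OF Fint, symmetric])
    also have "\<dots> = (\<integral>x. lam i * (f x * f x) \<partial>\<mu>)"
    proof (rule integral_cong_AE)
      show "(\<lambda>x. \<integral>z. F (x, z) \<partial>\<mu>) \<in> borel_measurable \<mu>" by measurable
      show "(\<lambda>x. lam i * (f x * f x)) \<in> borel_measurable \<mu>" unfolding f_def by measurable
      show "AE x in \<mu>. (\<integral>z. F (x, z) \<partial>\<mu>) = lam i * (f x * f x)"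
        using Phi_eigen[of i]
      proof (rule eventually_mono)
        fix x assume H: "(LINT z|\<mu>. k x z * Phi i z) = lam i * Phi i x"
        have "(\<integral>z. F (x, z) \<partial>\<mu>) = (\<integral>z. f x * (k x z * f z) \<partial>\<mu>)"
          unfolding F_def by (simp add: mult_ac)
        also have "\<dots> = f x * (\<integral>z. k x z * f z \<partial>\<mu>)" by simp
        also have "\<dots> = lam i * (f x * f x)" using H unfolding f_def by simp
        finally show "(\<integral>z. F (x, z) \<partial>\<mu>) = lam i * (f x * f x)" .
      qed
    qed
    also have "\<dots> = lam i * (\<integral>x. f x * f x \<partial>\<mu>)" by simp
    also have "\<dots> = lam i" using Phi_orthonormal[of i i] unfolding f_def by simp
    finally show ?thesis .
  qed
  define Y where "Y = (\<lambda>j l \<omega>. F (Xs j \<omega>, Xs l \<omega>))"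
  have Ym[measurable]: "Y j l \<in> borel_measurable P" for j l
  proof -
    have "(\<lambda>\<omega>. (Xs j \<omega>, Xs l \<omega>)) \<in> measurable P (\<mu> \<Otimes>\<^sub>M \<mu>)"
      by (rule measurable_Pair) (rule Xs_meas)+
    then show ?thesis unfolding Y_def using Fm by (rule measurable_compose)
  qed
  have Yint: "integrable P (Y j l)" for j l
    by (rule PP.integrable_const_bound[where B=B]) (use FB Ym in \<open>auto simp: Y_def\<close>)
  have Yoff: "(\<integral>\<omega>. Y j l \<omega> \<partial>P) = I" if "j \<noteq> l" for j l
    unfolding Y_def I_def by (rule pair_integral[OF P_prob Xs_indep Xs_distr that Fm])
  have Ydiag: "(\<integral>\<omega>. Y j j \<omega> \<partial>P) \<le> B" for j
  proof (rule PP.integral_le_const[OF Yint], rule AE_I2)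
    fix \<omega> show "Y j j \<omega> \<le> B" using FB[of "(Xs j \<omega>, Xs j \<omega>)"] unfolding Y_def by (simp add: abs_le_iff)
  qed
  have key: "0 \<le> (real m * real m - real m) * I + real m * B" for m
  proof -
    have "0 \<le> (\<integral>\<omega>. (\<Sum>j<m. \<Sum>l<m. Y j l \<omega>) \<partial>P)"
    proof (rule Bochner_Integration.integral_nonneg)
      fix \<omega> assume "\<omega> \<in> space P"
      have "0 \<le> (\<Sum>j<m. \<Sum>l<m. f (Xs j \<omega>) * f (Xs l \<omega>) * k (Xs j \<omega>) (Xs l \<omega>))"
      proof -
        have "\<forall>(m::nat) (xs::nat \<Rightarrow> 'a) (c::nat \<Rightarrow> real). 0 \<le> (\<Sum>i<m. \<Sum>j<m. c i * c j * k (xs i) (xs j))"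
          using pd unfolding pd_kernel_def by blast
        from this[rule_format, where m=m and xs="\<lambda>j. Xs j \<omega>" and c="\<lambda>j. f (Xs j \<omega>)"] show ?thesis .
      qed
      then show "0 \<le> (\<Sum>j<m. \<Sum>l<m. Y j l \<omega>)" unfolding Y_def F_def by simp
    qed
    also have "\<dots> = (\<Sum>j<m. \<Sum>l<m. (\<integral>\<omega>. Y j l \<omega> \<partial>P))"
      using Yint by (simp add: Bochner_Integration.integral_sum)
    also have "\<dots> = (\<Sum>j<m. \<Sum>l<m. I + (if j = l then (\<integral>\<omega>. Y j j \<omega> \<partial>P) - I else 0))"
      by (intro sum.cong refl) (auto simp: Yoff)
    also have "\<dots> = (\<Sum>j<m. real m * I + ((\<integral>\<omega>. Y j j \<omega> \<partial>P) - I))"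
      by (intro sum.cong refl) (simp add: sum.distrib)
    also have "\<dots> \<le> (\<Sum>j<m. real m * I + (B - I))"
      by (intro sum_mono) (use Ydiag in auto)
    also have "\<dots> = (real m * real m - real m) * I + real m * B"
      by (simp add: algebra_simps)
    finally show ?thesis .
  qed
  show ?thesis
  proof (rule ccontr)
    assume "\<not> 0 \<le> lam i"
    then have In: "I < 0" using I_lam by simp
    obtain m :: nat where m: "\<bar>B\<bar> / (- I) + 2 < real m" using reals_Archimedean2 by blast
    have m1: "1 < real m" using m In by (smt (verit) divide_nonneg_pos abs_ge_zero)
    have "\<bar>B\<bar> < (real m - 1) * (- I)" using m In by (simp add: field_simps)
    then have "B < (real m - 1) * (- I)" by simp
    then have "real m * B < real m * ((real m - 1) * (- I))" using m1 by (intro mult_strict_left_mono) auto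
    then have "(real m * real m - real m) * I + real m * B < 0" by (simp add: algebra_simps)
    then show False using key[of m] by simp
  qed
qed


lemma cont_bound:
  fixes k :: "'a::metric_space \<Rightarrow> 'a \<Rightarrow> real"
  assumes "compact (UNIV :: 'a set)" and "continuous_on UNIV (\<lambda>(x, z). k x z)"
  shows "\<exists>C. \<forall>x z. \<bar>k x z\<bar> \<le> C"
proof -
  have "compact (UNIV \<times> UNIV :: ('a \<times> 'a) set)" by (rule compact_Times[OF assms(1) assms(1)])
  then have "compact (UNIV :: ('a \<times> 'a) set)" by (simp only: UNIV_Times_UNIV)
  then have "compact ((\<lambda>(x, z). k x z) ` UNIV)" by (rule compact_continuous_image[OF assms(2)])
  then have "bounded ((\<lambda>(x, z). k x z) ` UNIV)" by (rule compact_imp_bounded)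
  then obtain C where "\<forall>y\<in>(\<lambda>(x, z). k x z) ` UNIV. norm y \<le> C" unfolding bounded_iff by blast
  then have "\<bar>k x z\<bar> \<le> C" for x z by (metis (mono_tags, lifting) UNIV_I case_prod_conv image_eqI real_norm_def)
  then show ?thesis by blast
qed

lemma (in ser_kernel) tail_meas:
  assumes "\<And>i. Phi i \<in> borel_measurable \<mu>"
  shows "(\<lambda>x. tailk c Phi r x x) \<in> borel_measurable \<mu>"
proof (rule borel_measurable_LIMSEQ_real)
  note [measurable] = assms
  show "(\<lambda>N. \<Sum>i<N. c (i + r) * Phi (i + r) x * Phi (i + r) x) \<longlonglongrightarrow> tailk c Phi r x x" for x
    unfolding tailk_def by (rule summable_LIMSEQ[OF summ_shift])
  show "(\<lambda>x. \<Sum>i<N. c (i + r) * Phi (i + r) x * Phi (i + r) x) \<in> borel_measurable \<mu>" for N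
    by measurable
qed

lemma (in ser_kernel) tail_int_lim:
  assumes prob: "prob_space \<mu>" and meas: "\<And>i. Phi i \<in> borel_measurable \<mu>"
    and C: "\<And>x. (\<Sum>i. c i * Phi i x * Phi i x) \<le> C"
  shows "(\<lambda>r. \<integral>x. tailk c Phi r x x \<partial>\<mu>) \<longlonglongrightarrow> 0"
proof -
  interpret prob_space \<mu> by (rule prob)
  have "(\<lambda>r. \<integral>x. tailk c Phi r x x \<partial>\<mu>) \<longlonglongrightarrow> (\<integral>x. 0 \<partial>\<mu>)"
  proof (rule integral_dominated_convergence[where w="\<lambda>_. C"])
    show "(\<lambda>x. 0::real) \<in> borel_measurable \<mu>" by simp
    show "(\<lambda>x. tailk c Phi r x x) \<in> borel_measurable \<mu>" for r by (rule tail_meas[OF meas])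
    show "integrable \<mu> (\<lambda>_. C)" by simp
    show "AE x in \<mu>. (\<lambda>r. tailk c Phi r x x) \<longlonglongrightarrow> 0" by (intro AE_I2 tail_lim)
    show "AE x in \<mu>. norm (tailk c Phi r x x) \<le> C" for r
    proof (rule AE_I2)
      fix x
      have "norm (tailk c Phi r x x) = tailk c Phi r x x" using tail_nonneg[of r x] by simp
      also have "\<dots> \<le> C" using tail_le[of r x] C[of x] by simp
      finally show "norm (tailk c Phi r x x) \<le> C" .
    qed
  qed
  then show ?thesis by simp
qed

lemma (in ser_kernel) coef_lim:
  assumes prob: "prob_space \<mu>" and meas: "\<And>i. Phi i \<in> borel_measurable \<mu>"
    and C: "\<And>x. (\<Sum>i. c i * Phi i x * Phi i x) \<le> C"
    and orth: "\<And>i. (\<integral>x. Phi i x * Phi i x \<partial>\<mu>) = 1"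
  shows "c \<longlonglongrightarrow> 0"
proof -
  interpret prob_space \<mu> by (rule prob)
  note [measurable] = meas
  have "(\<lambda>i. \<integral>x. c i * Phi i x * Phi i x \<partial>\<mu>) \<longlonglongrightarrow> (\<integral>x. 0 \<partial>\<mu>)"
  proof (rule integral_dominated_convergence[where w="\<lambda>_. C"])
    show "(\<lambda>x. 0::real) \<in> borel_measurable \<mu>" by simp
    show "(\<lambda>x. c i * Phi i x * Phi i x) \<in> borel_measurable \<mu>" for i by measurable
    show "integrable \<mu> (\<lambda>_. C)" by simp
    show "AE x in \<mu>. (\<lambda>i. c i * Phi i x * Phi i x) \<longlonglongrightarrow> 0"
      by (intro AE_I2 summable_LIMSEQ_zero summ)
    show "AE x in \<mu>. norm (c i * Phi i x * Phi i x) \<le> C" for i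
    proof (rule AE_I2)
      fix x
      have "0 \<le> c i * Phi i x * Phi i x" using c0[of i] by (simp add: mult.assoc)
      then have "norm (c i * Phi i x * Phi i x) = c i * Phi i x * Phi i x" by simp
      also have "\<dots> \<le> C" using term_le[of i x] C[of x] by simp
      finally show "norm (c i * Phi i x * Phi i x) \<le> C" .
    qed
  qed
  moreover have "(\<integral>x. c i * Phi i x * Phi i x \<partial>\<mu>) = c i" for i
    using orth[of i] by (simp add: mult.assoc)
  ultimately show ?thesis by simp
qed


theorem theorem1:
  fixes \<mu> :: "'a::metric_space measure"
    and k :: "'a \<Rightarrow> 'a \<Rightarrow> real"
    and lam :: "nat \<Rightarrow> real"
    and Phi :: "nat \<Rightarrow> 'a \<Rightarrow> real"
    and g :: "real \<Rightarrow> real"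
    and L M :: real
    and P :: "'w measure"
    and Xs :: "nat \<Rightarrow> 'w \<Rightarrow> 'a"
    and lamhat :: "nat \<Rightarrow> 'w \<Rightarrow> nat \<Rightarrow> real"
    and V :: "nat \<Rightarrow> 'w \<Rightarrow> nat \<Rightarrow> nat \<Rightarrow> real"
  assumes compact_X: "compact (UNIV :: 'a set)"
    and borel_mu: "sets \<mu> = sets borel"
    and prob_mu: "prob_space \<mu>"
    and mercer: "mercer_kernel k"
    and Phi_meas: "\<And>i. Phi i \<in> borel_measurable \<mu>"
    and Phi_orthonormal: "\<And>i j. (LINT x|\<mu>. Phi i x * Phi j x) = (if i = j then 1 else 0)"
    and Phi_eigen: "\<And>i. AE x in \<mu>. (LINT z|\<mu>. k x z * Phi i z) = lam i * Phi i x"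
    and expansion: "\<And>x z. (\<lambda>i. lam i * Phi i x * Phi i z) sums k x z"
    and g_nonneg: "\<And>t. 0 \<le> g t"
    and g_lipschitz: "L-lipschitz_on UNIV g"
    and kg_summable: "\<And>x z. summable (\<lambda>i. g (lam i) * Phi i x * Phi i z)"
    and kg_mercer: "mercer_kernel (ms_kernel g lam Phi)"
    and Phi_bounded: "\<And>i x. \<bar>Phi i x\<bar> \<le> M"
    and P_prob: "prob_space P"
    and Xs_meas: "\<And>i. Xs i \<in> measurable P \<mu>"
    and Xs_indep: "prob_space.indep_vars P (\<lambda>_. \<mu>) Xs UNIV"
    and Xs_distr: "\<And>i. distr P \<mu> (Xs i) = \<mu>"
    and eigdec: "\<And>n \<omega>. \<omega> \<in> space P \<Longrightarrow>
        orth_eigenbasis n (kernel_matrix k n (\<lambda>i. Xs i \<omega>)) (lamhat n \<omega>) (V n \<omega>)"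
  shows "AE \<omega> in P. (\<lambda>n. frob_dist n
            (spectral_modify n g (lamhat n \<omega>) (V n \<omega>))
            (kernel_matrix (ms_kernel g lam Phi) n (\<lambda>i. Xs i \<omega>))) \<longlonglongrightarrow> 0"
proof -
  interpret mu: prob_space \<mu> by (rule prob_mu)
  interpret PP: prob_space P by (rule P_prob)
  note [measurable] = Phi_meas
  define kg where "kg = ms_kernel g lam Phi"
  have pd: "pd_kernel k" and kcont: "continuous_on UNIV (\<lambda>(x, z). k x z)"
    using mercer unfolding mercer_kernel_def by auto
  have kgcont: "continuous_on UNIV (\<lambda>(x, z). kg x z)"
    using kg_mercer unfolding mercer_kernel_def kg_def by auto
  obtain Ck where kC: "\<And>x z. \<bar>k x z\<bar> \<le> Ck" using cont_bound[OF compact_X kcont] by blast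
  obtain Cg where kgC: "\<And>x z. \<bar>kg x z\<bar> \<le> Cg" using cont_bound[OF compact_X kgcont] by blast
  have lam0: "0 \<le> lam i" for i
    by (rule lam_nonneg[OF prob_mu pd Phi_meas Phi_orthonormal Phi_eigen expansion Phi_bounded kC
          P_prob Xs_meas Xs_indep Xs_distr])
  interpret S1: ser_kernel lam Phi
  proof
    show "0 \<le> lam i" for i by (rule lam0)
    show "summable (\<lambda>i. lam i * Phi i x * Phi i z)" for x z using expansion[of x z] by (rule sums_summable)
  qed
  interpret S2: ser_kernel "\<lambda>i. g (lam i)" Phi
  proof
    show "0 \<le> g (lam i)" for i by (rule g_nonneg)
    show "summable (\<lambda>i. g (lam i) * Phi i x * Phi i z)" for x z by (rule kg_summable)
  qed
  have ksum: "k x z = (\<Sum>i. lam i * Phi i x * Phi i z)" for x z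
    using expansion[of x z] by (simp add: sums_iff)
  have kgsum: "kg x z = (\<Sum>i. g (lam i) * Phi i x * Phi i z)" for x z
    unfolding kg_def ms_kernel_def ..
  have L0: "0 \<le> L" using g_lipschitz by (rule lipschitz_on_nonneg)
  have Lip: "\<bar>g a - g b\<bar> \<le> L * \<bar>a - b\<bar>" for a b
    using lipschitz_onD[OF g_lipschitz, of a b] by (simp add: dist_real_def)
  have orth1: "(\<integral>x. Phi i x * Phi i x \<partial>\<mu>) = 1" for i using Phi_orthonormal[of i i] by simp
  have lamlim: "lam \<longlonglongrightarrow> 0"
    by (rule S1.coef_lim[OF prob_mu Phi_meas _ orth1, where C=Ck]) (use kC ksum in \<open>metis abs_le_D1\<close>)
  have glim: "(\<lambda>i. g (lam i)) \<longlonglongrightarrow> 0"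
    by (rule S2.coef_lim[OF prob_mu Phi_meas _ orth1, where C=Cg]) (use kgC kgsum in \<open>metis abs_le_D1\<close>)
  have gcont: "isCont g 0"
  proof -
    have "continuous_on UNIV g" using g_lipschitz by (rule lipschitz_on_continuous_on)
    then show ?thesis by (simp add: continuous_on_eq_continuous_at)
  qed
  have "(\<lambda>i. g (lam i)) \<longlonglongrightarrow> g 0" by (rule isCont_tendsto_compose[OF gcont lamlim])
  then have g0: "g 0 = 0" using glim by (rule LIMSEQ_unique)
  define tk where "tk = tailk lam Phi"
  define tg where "tg = tailk (\<lambda>i. g (lam i)) Phi"
  define \<tau> where "\<tau> = (\<lambda>r. \<integral>x. tk r x x \<partial>\<mu>)"
  define \<tau>g where "\<tau>g = (\<lambda>r. \<integral>x. tg r x x \<partial>\<mu>)"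
  have \<tau>0: "\<tau> \<longlonglongrightarrow> 0" unfolding \<tau>_def tk_def
    by (rule S1.tail_int_lim[OF prob_mu Phi_meas, where C=Ck]) (use kC ksum in \<open>metis abs_le_D1\<close>)
  have \<tau>g0: "\<tau>g \<longlonglongrightarrow> 0" unfolding \<tau>g_def tg_def
    by (rule S2.tail_int_lim[OF prob_mu Phi_meas, where C=Cg]) (use kgC kgsum in \<open>metis abs_le_D1\<close>)
  have tkB: "\<bar>tk r x x\<bar> \<le> Ck" for r x
    using S1.tail_nonneg[of r x] S1.tail_le[of r x] kC[of x x] ksum[of x x] unfolding tk_def by simp
  have tgB: "\<bar>tg r x x\<bar> \<le> Cg" for r x
    using S2.tail_nonneg[of r x] S2.tail_le[of r x] kgC[of x x] kgsum[of x x] unfolding tg_def by simp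
  have AE1: "AE \<omega> in P. \<forall>p::nat \<times> nat. (\<lambda>n. (\<Sum>j<n. Phi (fst p) (Xs j \<omega>) * Phi (snd p) (Xs j \<omega>)) / real n)
        \<longlonglongrightarrow> (if fst p = snd p then 1 else 0)"
    unfolding AE_all_countable
  proof
    fix p :: "nat \<times> nat"
    have "AE \<omega> in P. (\<lambda>n. (\<Sum>j<n. Phi (fst p) (Xs j \<omega>) * Phi (snd p) (Xs j \<omega>)) / real n)
        \<longlonglongrightarrow> (\<integral>x. Phi (fst p) x * Phi (snd p) x \<partial>\<mu>)"
    proof (rule slln_bounded[OF P_prob Xs_meas Xs_indep Xs_distr, where Bnd="M * M"])
      show "(\<lambda>x. Phi (fst p) x * Phi (snd p) x) \<in> borel_measurable \<mu>" by measurable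
      fix x
      have "\<bar>Phi (fst p) x\<bar> * \<bar>Phi (snd p) x\<bar> \<le> M * M"
        by (intro mult_mono Phi_bounded) (use Phi_bounded[of 0 x] in auto)
      then show "\<bar>Phi (fst p) x * Phi (snd p) x\<bar> \<le> M * M" by (simp add: abs_mult)
    qed
    then show "AE \<omega> in P. (\<lambda>n. (\<Sum>j<n. Phi (fst p) (Xs j \<omega>) * Phi (snd p) (Xs j \<omega>)) / real n)
        \<longlonglongrightarrow> (if fst p = snd p then 1 else 0)"
      using Phi_orthonormal[of "fst p" "snd p"] by simp
  qed
  have AE2: "AE \<omega> in P. \<forall>r. (\<lambda>n. (\<Sum>j<n. tk r (Xs j \<omega>) (Xs j \<omega>)) / real n) \<longlonglongrightarrow> \<tau> r"
    unfolding AE_all_countable \<tau>_def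
  proof
    fix r
    show "AE \<omega> in P. (\<lambda>n. (\<Sum>j<n. tk r (Xs j \<omega>) (Xs j \<omega>)) / real n) \<longlonglongrightarrow> (\<integral>x. tk r x x \<partial>\<mu>)"
      by (rule slln_bounded[OF P_prob Xs_meas Xs_indep Xs_distr, where Bnd=Ck])
         (use tkB in \<open>auto simp: tk_def intro: S1.tail_meas[OF Phi_meas]\<close>)
  qed
  have AE3: "AE \<omega> in P. \<forall>r. (\<lambda>n. (\<Sum>j<n. tg r (Xs j \<omega>) (Xs j \<omega>)) / real n) \<longlonglongrightarrow> \<tau>g r"
    unfolding AE_all_countable \<tau>g_def
  proof
    fix r
    show "AE \<omega> in P. (\<lambda>n. (\<Sum>j<n. tg r (Xs j \<omega>) (Xs j \<omega>)) / real n) \<longlonglongrightarrow> (\<integral>x. tg r x x \<partial>\<mu>)"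
      by (rule slln_bounded[OF P_prob Xs_meas Xs_indep Xs_distr, where Bnd=Cg])
         (use tgB in \<open>auto simp: tg_def intro: S2.tail_meas[OF Phi_meas]\<close>)
  qed
  have "AE \<omega> in P. \<omega> \<in> space P" by (rule AE_space)
  with AE1 AE2 AE3 show ?thesis
  proof eventually_elim
    case (elim \<omega>)
    have Gl: "(\<lambda>n. (\<Sum>j<n. Phi a (Xs j \<omega>) * Phi b (Xs j \<omega>)) / real n) \<longlonglongrightarrow> (if a = b then 1 else 0)" for a b
      using elim(1)[rule_format, of "(a, b)"] by simp
    show ?case unfolding kg_def[symmetric]
    proof (rule det_conv[where tk=tk and tg=tg and \<tau>=\<tau> and \<tau>g=\<tau>g and Ck=Ck and L=L and lam=lam and Phi=Phi])
      show "orth_eigenbasis n (kernel_matrix k n (\<lambda>i. Xs i \<omega>)) (lamhat n \<omega>) (V n \<omega>)" for n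
        by (rule eigdec[OF elim(4)])
      show "k y z = (\<Sum>i<r. lam i * Phi i y * Phi i z) + tk r y z" for r y z
        unfolding tk_def ksum by (rule S1.split)
      show "kg y z = (\<Sum>i<r. g (lam i) * Phi i y * Phi i z) + tg r y z" for r y z
        unfolding tg_def kgsum by (rule S2.split)
      show "0 \<le> tk r y y" for r y unfolding tk_def by (rule S1.tail_nonneg)
      show "(tk r y z)\<^sup>2 \<le> tk r y y * tk r z z" for r y z unfolding tk_def by (rule S1.tail_CS)
      show "0 \<le> tg r y y" for r y unfolding tg_def by (rule S2.tail_nonneg)
      show "(tg r y z)\<^sup>2 \<le> tg r y y * tg r z z" for r y z unfolding tg_def by (rule S2.tail_CS)
    qed (use kC Lip g0 L0 Gl elim(2) elim(3) \<tau>0 \<tau>g0 in auto)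
  qed
qed


end
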